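(* Let $(S,\ast)$ and $(T,\ast')$ be adequate commutative partial semigroups, let $h:S\to T$ be a surjective partial semigroup homomorphism, and let $\tilde h:\beta S\to\beta T$ be the continuous extension of $h$, and suppose $\tilde h$ maps $\delta S$ onto $\delta T$. Let $A\subseteq T$ be a set that is not central in $T$, and suppose there is an idempotent $p\in\overline{A}\cap\tilde h(J_\delta(S))$. Then $h^{-1}(A)$ is a $C$-set in $S$ but is not a central set in $S$.
   Context: A partial semigroup is a pair $(S,\ast)$ where $\ast$ is an operation defined on a subset of $S\times S$ such that $(x\ast y)\ast z=x\ast(y\ast z)$ in the sense that if either side is defined, so is the other and they are equal; commutative means $x\ast y=y\ast x$ whenever defined. $\phi_S(s)=\{t: s\ast t\text{ defined}\}$, $\sigma_S(H)=\bigcap_{s\in H}\phi_S(s)$ for $H\in\mathcal{P}_f(S)$; $S$ is adequate if all $\sigma_S(H)\ne\emptyset$. A map $h:S\to T$ is a partial semigroup homomorphism if whenever $y\in\phi_S(x)$, $h(y)\in\phi_T(h(x))$ and $h(x\ast y)=h(x)\ast' h(y)$. $\tilde h(p)=\{B\subseteq T: h^{-1}(B)\in p\}$ for ultrafilters $p\in\beta S$; $\overline{A}=\{p: A\in p\}$. $\delta S=\bigcap_{x\in S}\overline{\phi_S(x)}$, with operation $p\ast q=\{A\subseteq S:\{s: s^{-1}A\in q\}\in p\}$, $s^{-1}A=\{t\in\phi_S(s): s\ast t\in A\}$; it is a compact right topological semigroup with smallest ideal $K(\delta S)$ (similarly for $T$). A set is central if it belongs to some idempotent in $K(\delta S)$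 (resp. $K(\delta T)$). A sequence $\langle y_n\rangle$ in $S$ is adequate if $\prod_{n\in F}y_n$ is defined for every $F\in\mathcal{P}_f(\mathbb{N})$ and for every $K\in\mathcal{P}_f(S)$ there is $m$ with $\prod_{n\in F}y_n\in\sigma_S(K)$ whenever $\min F\ge m$; $\mathcal{T}_S$ is the set of adequate sequences. For $W\in\mathcal{P}_f(S)$, $a\in S$, $W\ast a=\{w\ast a: w\in W,\ w\ast a\text{ defined}\}$. $B$ is a $J_\delta$-set if for every $F\in\mathcal{P}_f(\mathcal{T}_S)$ and $W\in\mathcal{P}_f(S)$ there exist $a\in\sigma_S(W)$, $H\in\mathcal{P}_f(\mathbb{N})$ with $\prod_{t\in H}f(t)\in\sigma_S(W\ast a)$ and $a\ast\prod_{t\in H}f(t)\in B$ for each $f\in F$; $J_\delta(S)=\{p\in\delta S:\text{every member of }p\text{ is a }J_\delta\text{-set}\}$. $A$ is a $C$-set if there exist $\alpha:\mathcal{P}_f(\mathcal{T}_S)\to S$ and $H:\mathcal{P}_f(\mathcal{T}_S)\to\mathcal{P}_f(\mathbb{N})$ such that (1) $F\subsetneq G$ implies $\max H(F)<\min H(G)$, and (2) whenever $G_1\subsetneq\cdots\subsetneq G_m$ in $\mathcal{P}_f(\mathcal{T}_S)$ and $f_i\in G_i$, $\prod_{i=1}^m\big(\alpha(G_i)\ast\prod_{t\in H(G_i)}f_i(t)\big)\in A$. *)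

theory Defs
  imports Main
begin

(* A partial semigroup on a type 'a: the operation is 'a => 'a => 'a option,
   None meaning "undefined". *)
type_synonym 'a pop = "'a \<Rightarrow> 'a \<Rightarrow> 'a option"

definition psemigroup :: "'a pop \<Rightarrow> bool" where
  "psemigroup op \<longleftrightarrow>
     (\<forall>x y z. Option.bind (op x y) (\<lambda>u. op u z) = Option.bind (op y z) (\<lambda>v. op x v))"

definition pcomm :: "'a pop \<Rightarrow> bool" where
  "pcomm op \<longleftrightarrow> (\<forall>x y. op x y = op y x)"

definition phi :: "'a pop \<Rightarrow> 'a \<Rightarrow> 'a set" where
  "phi op s = {t. op s t \<noteq> None}"

definition sigma :: "'a pop \<Rightarrow> 'a set \<Rightarrow> 'a set" where
  "sigma op H = (\<Inter>s\<in>H. phi op s)"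

definition adequate :: "'a pop \<Rightarrow> bool" where
  "adequate op \<longleftrightarrow> (\<forall>H. finite H \<and> H \<noteq> {} \<longrightarrow> sigma op H \<noteq> {})"

definition phom :: "'a pop \<Rightarrow> 'b pop \<Rightarrow> ('a \<Rightarrow> 'b) \<Rightarrow> bool" where
  "phom op op' h \<longleftrightarrow>
     (\<forall>x y. y \<in> phi op x \<longrightarrow> h y \<in> phi op' (h x) \<and> op' (h x) (h y) = map_option h (op x y))"

definition ultrafilter_on :: "'a set set \<Rightarrow> bool" where
  "ultrafilter_on p \<longleftrightarrow> UNIV \<in> p \<and> {} \<notin> p \<and>
     (\<forall>A B. A \<in> p \<and> A \<subseteq> B \<longrightarrow> B \<in> p) \<and>
     (\<forall>A B. A \<in> p \<and> B \<in> p \<longrightarrow> A \<inter> B \<in> p) \<and>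
     (\<forall>A. A \<in> p \<or> - A \<in> p)"

definition betaS :: "'a set set set" where
  "betaS = {p. ultrafilter_on p}"

definition htilde :: "('a \<Rightarrow> 'b) \<Rightarrow> 'a set set \<Rightarrow> 'b set set" where
  "htilde h p = {B. h -` B \<in> p}"

definition deltaS :: "'a pop \<Rightarrow> 'a set set set" where
  "deltaS op = {p \<in> betaS. \<forall>x. phi op x \<in> p}"

definition sinv :: "'a pop \<Rightarrow> 'a \<Rightarrow> 'a set \<Rightarrow> 'a set" where
  "sinv op s A = {t \<in> phi op s. the (op s t) \<in> A}"

definition ustar :: "'a pop \<Rightarrow> 'a set set \<Rightarrow> 'a set set \<Rightarrow> 'a set set" where
  "ustar op p q = {A. {s. sinv op s A \<in> q} \<in> p}"

definition is_ideal :: "'a pop \<Rightarrow> 'a set set set \<Rightarrow> bool" where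
  "is_ideal op I \<longleftrightarrow> I \<noteq> {} \<and> I \<subseteq> deltaS op \<and>
     (\<forall>p\<in>deltaS op. \<forall>q\<in>I. ustar op p q \<in> I \<and> ustar op q p \<in> I)"

definition Kmin :: "'a pop \<Rightarrow> 'a set set set" where
  "Kmin op = (THE K. is_ideal op K \<and> (\<forall>J. is_ideal op J \<longrightarrow> K \<subseteq> J))"

definition central :: "'a pop \<Rightarrow> 'a set \<Rightarrow> bool" where
  "central op A \<longleftrightarrow> (\<exists>p\<in>Kmin op. ustar op p p = p \<and> A \<in> p)"

fun oprod :: "'a pop \<Rightarrow> 'a option list \<Rightarrow> 'a option" where
  "oprod op [] = None"
| "oprod op (x # xs) =
     foldl (\<lambda>acc y. Option.bind acc (\<lambda>a. Option.bind y (\<lambda>b. op a b))) x xs"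

definition pprod :: "'a pop \<Rightarrow> (nat \<Rightarrow> 'a) \<Rightarrow> nat set \<Rightarrow> 'a option" where
  "pprod op f F = oprod op (map (\<lambda>n. Some (f n)) (sorted_list_of_set F))"

definition Pf :: "'x set \<Rightarrow> 'x set set" where
  "Pf X = {F. F \<subseteq> X \<and> finite F \<and> F \<noteq> {}}"

definition adequate_seq :: "'a pop \<Rightarrow> (nat \<Rightarrow> 'a) \<Rightarrow> bool" where
  "adequate_seq op f \<longleftrightarrow>
     (\<forall>F\<in>Pf UNIV. pprod op f F \<noteq> None) \<and>
     (\<forall>K\<in>Pf UNIV. \<exists>m. \<forall>F\<in>Pf UNIV. Min F \<ge> m \<longrightarrow> the (pprod op f F) \<in> sigma op K)"

definition TS :: "'a pop \<Rightarrow> (nat \<Rightarrow> 'a) set" where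
  "TS op = {f. adequate_seq op f}"

definition Wmul :: "'a pop \<Rightarrow> 'a set \<Rightarrow> 'a \<Rightarrow> 'a set" where
  "Wmul op W a = {c. \<exists>w\<in>W. op w a = Some c}"

definition Jdelta_set :: "'a pop \<Rightarrow> 'a set \<Rightarrow> bool" where
  "Jdelta_set op B \<longleftrightarrow>
     (\<forall>F\<in>Pf (TS op). \<forall>W\<in>Pf UNIV. \<exists>a\<in>sigma op W. \<exists>H\<in>Pf UNIV.
        \<forall>f\<in>F. the (pprod op f H) \<in> sigma op (Wmul op W a) \<and>
               op a (the (pprod op f H)) \<in> Some ` B)"

definition Jdelta :: "'a pop \<Rightarrow> 'a set set set" where
  "Jdelta op = {p \<in> deltaS op. \<forall>B\<in>p. Jdelta_set op B}"

definition C_set :: "'a pop \<Rightarrow> 'a set \<Rightarrow> bool" where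
  "C_set op A \<longleftrightarrow>
     (\<exists>(\<alpha> :: (nat \<Rightarrow> 'a) set \<Rightarrow> 'a) (H :: (nat \<Rightarrow> 'a) set \<Rightarrow> nat set).
        (\<forall>F\<in>Pf (TS op). H F \<in> Pf UNIV) \<and>
        (\<forall>F\<in>Pf (TS op). \<forall>G\<in>Pf (TS op). F \<subset> G \<longrightarrow> Max (H F) < Min (H G)) \<and>
        (\<forall>Gs fs. Gs \<noteq> [] \<and> length fs = length Gs \<and>
           (\<forall>i<length Gs. Gs ! i \<in> Pf (TS op) \<and> fs ! i \<in> Gs ! i) \<and>
           (\<forall>i. Suc i < length Gs \<longrightarrow> Gs ! i \<subset> Gs ! Suc i) \<longrightarrow>
           oprod op (map (\<lambda>i. Option.bind (pprod op (fs ! i) (H (Gs ! i))) (\<lambda>y. op (\<alpha> (Gs ! i)) y))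
                        [0..<length Gs]) \<in> Some ` A))"

end

theory Submission
  imports Defs
begin

lemma uf_UNIV: "ultrafilter_on p \<Longrightarrow> UNIV \<in> p" by (simp add: ultrafilter_on_def)
lemma uf_empty: "ultrafilter_on p \<Longrightarrow> {} \<notin> p" by (simp add: ultrafilter_on_def)
lemma uf_mono: "ultrafilter_on p \<Longrightarrow> A \<in> p \<Longrightarrow> A \<subseteq> B \<Longrightarrow> B \<in> p"
  unfolding ultrafilter_on_def by blast
lemma uf_Int: "ultrafilter_on p \<Longrightarrow> A \<in> p \<Longrightarrow> B \<in> p \<Longrightarrow> A \<inter> B \<in> p"
  unfolding ultrafilter_on_def by blast
lemma uf_Int_iff: "ultrafilter_on p \<Longrightarrow> A \<inter> B \<in> p \<longleftrightarrow> A \<in> p \<and> B \<in> p"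
  using uf_Int[of p A B] uf_mono[of p "A \<inter> B" A] uf_mono[of p "A \<inter> B" B] by blast
lemma uf_compl: assumes u: "ultrafilter_on p" shows "- A \<in> p \<longleftrightarrow> A \<notin> p"
proof -
  { assume "- A \<in> p" "A \<in> p" then have "A \<inter> - A \<in> p" using uf_Int u by blast
    then have False using uf_empty[OF u] by simp }
  moreover { assume "A \<notin> p" then have "- A \<in> p" using u unfolding ultrafilter_on_def by blast }
  ultimately show ?thesis by blast
qed
lemma uf_nonempty: "ultrafilter_on p \<Longrightarrow> A \<in> p \<Longrightarrow> \<exists>x. x \<in> A"
  by (metis ex_in_conv uf_empty)
lemma uf_sub_eq: assumes u0: "ultrafilter_on p" "ultrafilter_on q" "p \<subseteq> q" shows "p = q"
proof (rule ccontr)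
  assume "p \<noteq> q"
  note u = u0 this
  then obtain A where "A \<in> q" "A \<notin> p" by blast
  then have "- A \<in> q" using u uf_compl[of p A] by blast
  then show False using \<open>A \<in> q\<close> uf_compl[of q A] u by blast
qed
lemma uf_Inter_fin: assumes "ultrafilter_on p" "finite M" "\<forall>x\<in>M. X x \<in> p"
  shows "(\<Inter>x\<in>M. X x) \<in> p"
  using assms(2,3)
proof (induction M rule: finite_induct)
  case empty then show ?case using assms(1) uf_UNIV by auto
next
  case (insert x F) then show ?case using assms(1) uf_Int by auto
qed

definition pfilter :: "'a set set \<Rightarrow> bool" where
  "pfilter F \<longleftrightarrow> UNIV \<in> F \<and> {} \<notin> F \<and> (\<forall>A B. A \<in> F \<and> A \<subseteq> B \<longrightarrow> B \<in> F) \<and>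
     (\<forall>A B. A \<in> F \<and> B \<in> F \<longrightarrow> A \<inter> B \<in> F)"

lemma pfilterI: "UNIV \<in> F \<Longrightarrow> {} \<notin> F \<Longrightarrow> (\<And>A B. A \<in> F \<Longrightarrow> A \<subseteq> B \<Longrightarrow> B \<in> F) \<Longrightarrow>
   (\<And>A B. A \<in> F \<Longrightarrow> B \<in> F \<Longrightarrow> A \<inter> B \<in> F) \<Longrightarrow> pfilter F"
  unfolding pfilter_def by blast
lemma pf_UNIV: "pfilter F \<Longrightarrow> UNIV \<in> F" unfolding pfilter_def by blast
lemma pf_empty: "pfilter F \<Longrightarrow> {} \<notin> F" unfolding pfilter_def by blast
lemma pf_mono: "pfilter F \<Longrightarrow> A \<in> F \<Longrightarrow> A \<subseteq> B \<Longrightarrow> B \<in> F" unfolding pfilter_def by blast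
lemma pf_Int: "pfilter F \<Longrightarrow> A \<in> F \<Longrightarrow> B \<in> F \<Longrightarrow> A \<inter> B \<in> F" unfolding pfilter_def by blast

lemma uf_extend:
  assumes ne: "\<B> \<noteq> {}" and int: "\<forall>A\<in>\<B>. \<forall>B\<in>\<B>. \<exists>C\<in>\<B>. C \<subseteq> A \<inter> B" and emp: "{} \<notin> \<B>"
  shows "\<exists>p. ultrafilter_on p \<and> \<B> \<subseteq> p"
proof -
  define \<FF> where "\<FF> = {F. pfilter F \<and> \<B> \<subseteq> F}"
  define F0 where "F0 = {X. \<exists>B\<in>\<B>. B \<subseteq> X}"
  have "pfilter F0"
  proof (rule pfilterI)
    show "UNIV \<in> F0" using ne unfolding F0_def by auto
    show "{} \<notin> F0" using emp unfolding F0_def by auto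
  next
    fix A B assume "A \<in> F0" "A \<subseteq> B" then show "B \<in> F0" unfolding F0_def by blast
  next
    fix A B assume "A \<in> F0" "B \<in> F0"
    then obtain A' B' where "A' \<in> \<B>" "B' \<in> \<B>" "A' \<subseteq> A" "B' \<subseteq> B" unfolding F0_def by blast
    then obtain C where "C \<in> \<B>" "C \<subseteq> A' \<inter> B'" using int by blast
    then show "A \<inter> B \<in> F0" using \<open>A' \<subseteq> A\<close> \<open>B' \<subseteq> B\<close> unfolding F0_def by blast
  qed
  moreover have "\<B> \<subseteq> F0" unfolding F0_def by blast
  ultimately have F0: "F0 \<in> \<FF>" unfolding \<FF>_def by blast
  have "\<forall>C\<in>chains \<FF>. \<exists>U\<in>\<FF>. \<forall>X\<in>C. X \<subseteq> U"
  proof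
    fix C assume C: "C \<in> chains \<FF>"
    show "\<exists>U\<in>\<FF>. \<forall>X\<in>C. X \<subseteq> U"
    proof (cases "C = {}")
      case True then show ?thesis using F0 by auto
    next
      case False
      have sub: "\<And>X. X \<in> C \<Longrightarrow> pfilter X \<and> \<B> \<subseteq> X" using C chainsD2 unfolding \<FF>_def by blast
      obtain X0 where X0: "X0 \<in> C" using False by blast
      have "pfilter (\<Union>C)"
      proof (rule pfilterI)
        show "UNIV \<in> \<Union>C" using X0 sub pf_UNIV by blast
        show "{} \<notin> \<Union>C" using sub pf_empty by blast
      next
        fix A B assume "A \<in> \<Union>C" "A \<subseteq> B" then show "B \<in> \<Union>C" using sub pf_mono by blast
      next
        fix A B assume "A \<in> \<Union>C" "B \<in> \<Union>C"
        then obtain X Y where XY: "X \<in> C" "Y \<in> C" "A \<in> X" "B \<in> Y" by blast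
        then have "X \<subseteq> Y \<or> Y \<subseteq> X" using C chainsD by blast
        then show "A \<inter> B \<in> \<Union>C"
        proof
          assume "X \<subseteq> Y" then have "A \<inter> B \<in> Y" using XY sub pf_Int by blast
          then show ?thesis using XY by blast
        next
          assume "Y \<subseteq> X" then have "A \<inter> B \<in> X" using XY sub pf_Int by blast
          then show ?thesis using XY by blast
        qed
      qed
      moreover have "\<B> \<subseteq> \<Union>C" using X0 sub by blast
      ultimately have "\<Union>C \<in> \<FF>" unfolding \<FF>_def by blast
      then show ?thesis by blast
    qed
  qed
  then obtain M where M: "M \<in> \<FF>" "\<forall>X\<in>\<FF>. M \<subseteq> X \<longrightarrow> X = M" using Zorn_Lemma2[of \<FF>] by blast
  have pM: "pfilter M" and BM: "\<B> \<subseteq> M" using M(1) unfolding \<FF>_def by auto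
  have "ultrafilter_on M" unfolding ultrafilter_on_def
  proof (intro conjI allI impI)
    show "UNIV \<in> M" "{} \<notin> M" using pM pf_UNIV pf_empty by auto
  next
    fix A B assume "A \<in> M \<and> A \<subseteq> B" then show "B \<in> M" using pM pf_mono by blast
  next
    fix A B assume "A \<in> M \<and> B \<in> M" then show "A \<inter> B \<in> M" using pM pf_Int by blast
  next
    fix A show "A \<in> M \<or> - A \<in> M"
    proof (rule ccontr)
      assume nA: "\<not> (A \<in> M \<or> - A \<in> M)"
      show False
      proof (cases "\<exists>X\<in>M. X \<inter> A = {}")
        case True
        then obtain X where "X \<in> M" "X \<subseteq> - A" by blast
        then have "- A \<in> M" using pM pf_mono by blast
        then show False using nA by blast
      next
        case False
        define M' where "M' = {Y. \<exists>X\<in>M. X \<inter> A \<subseteq> Y}"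
        have "pfilter M'"
        proof (rule pfilterI)
          show "UNIV \<in> M'" using pM pf_UNIV unfolding M'_def by blast
          show "{} \<notin> M'" using False unfolding M'_def by blast
        next
          fix Y Z assume "Y \<in> M'" "Y \<subseteq> Z" then show "Z \<in> M'" unfolding M'_def by blast
        next
          fix Y Z assume "Y \<in> M'" "Z \<in> M'"
          then obtain X1 X2 where X: "X1 \<in> M" "X2 \<in> M" "X1 \<inter> A \<subseteq> Y" "X2 \<inter> A \<subseteq> Z" unfolding M'_def by blast
          then have "X1 \<inter> X2 \<in> M" using pM pf_Int by blast
          moreover have "(X1 \<inter> X2) \<inter> A \<subseteq> Y \<inter> Z" using X by blast
          ultimately show "Y \<inter> Z \<in> M'" unfolding M'_def by blast
        qed
        moreover have "M \<subseteq> M'" unfolding M'_def by blast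
        moreover have "A \<in> M'" unfolding M'_def using pM pf_UNIV by blast
        ultimately have "M' \<in> \<FF>" "M \<subseteq> M'" "M' \<noteq> M" using BM nA unfolding \<FF>_def by auto
        then show False using M(2) by blast
      qed
    qed
  qed
  then show ?thesis using BM by blast
qed

lemma uf_eq_on: "ultrafilter_on q \<Longrightarrow> P \<in> q \<Longrightarrow> X \<inter> P = Y \<inter> P \<Longrightarrow> X \<in> q \<longleftrightarrow> Y \<in> q"
  using uf_Int_iff[of q X P] uf_Int_iff[of q Y P] by simp

lemma assoc_some: assumes "psemigroup op" "op x y = Some u" shows "op u z = Option.bind (op y z) (\<lambda>v. op x v)"
proof -
  from assms(1) have "Option.bind (op x y) (\<lambda>u. op u z) = Option.bind (op y z) (\<lambda>v. op x v)"
    unfolding psemigroup_def by blast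
  then show ?thesis using assms(2) by simp
qed

lemma phi_iff: "t \<in> phi op s \<longleftrightarrow> op s t \<noteq> None" by (simp add: phi_def)

lemma sinv_iff: "t \<in> sinv op s A \<longleftrightarrow> op s t \<noteq> None \<and> the (op s t) \<in> A"
  by (simp add: sinv_def phi_def)

lemma sinv_assoc:
  assumes ps: "psemigroup op" and y: "op x y = Some u"
  shows "sinv op y (sinv op x A) = sinv op u A"
proof (rule set_eqI)
  fix z
  have e: "op u z = Option.bind (op y z) (\<lambda>v. op x v)" using assoc_some[OF ps y] .
  show "z \<in> sinv op y (sinv op x A) \<longleftrightarrow> z \<in> sinv op u A"
    unfolding sinv_iff e by (cases "op y z") auto
qed

lemma ustar_iff: "A \<in> ustar op p q \<longleftrightarrow> {s. sinv op s A \<in> q} \<in> p"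
  by (simp add: ustar_def)

lemma deltaS_uf: "p \<in> deltaS op \<Longrightarrow> ultrafilter_on p"
  by (simp add: deltaS_def betaS_def)
lemma deltaS_phi: "p \<in> deltaS op \<Longrightarrow> phi op x \<in> p"
  by (simp add: deltaS_def)
lemma deltaS_I: "ultrafilter_on p \<Longrightarrow> (\<And>x. phi op x \<in> p) \<Longrightarrow> p \<in> deltaS op"
  by (simp add: deltaS_def betaS_def)

lemma sinv_Int: "sinv op s (A \<inter> B) = sinv op s A \<inter> sinv op s B" by (auto simp: sinv_def)
lemma sinv_mono: "A \<subseteq> B \<Longrightarrow> sinv op s A \<subseteq> sinv op s B" by (auto simp: sinv_def)
lemma sinv_UNIV: "sinv op s UNIV = phi op s" by (auto simp: sinv_def)
lemma sinv_empty: "sinv op s {} = {}" by (auto simp: sinv_def)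
lemma sinv_compl: "sinv op s (- A) = phi op s - sinv op s A" by (auto simp: sinv_def)

lemma ustar_uf:
  assumes p: "ultrafilter_on p" and q: "q \<in> deltaS op"
  shows "ultrafilter_on (ustar op p q)"
proof -
  have uq: "ultrafilter_on q" using q deltaS_uf by blast
  show ?thesis unfolding ultrafilter_on_def ustar_iff
  proof (intro conjI allI impI)
    show "{s. sinv op s UNIV \<in> q} \<in> p" unfolding sinv_UNIV using deltaS_phi[OF q] uf_UNIV[OF p] by simp
    show "{s. sinv op s {} \<in> q} \<notin> p" unfolding sinv_empty using uf_empty[OF uq] uf_empty[OF p] by simp
  next
    fix A B assume "{s. sinv op s A \<in> q} \<in> p \<and> A \<subseteq> B"
    moreover then have "{s. sinv op s A \<in> q} \<subseteq> {s. sinv op s B \<in> q}"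
      using sinv_mono[of A B op] uf_mono[OF uq] by (metis (no_types, lifting) mem_Collect_eq subsetI)
    ultimately show "{s. sinv op s B \<in> q} \<in> p" using uf_mono[OF p] by blast
  next
    fix A B assume "{s. sinv op s A \<in> q} \<in> p \<and> {s. sinv op s B \<in> q} \<in> p"
    then have "{s. sinv op s A \<in> q} \<inter> {s. sinv op s B \<in> q} \<in> p" using uf_Int[OF p] by blast
    moreover have "{s. sinv op s A \<in> q} \<inter> {s. sinv op s B \<in> q} = {s. sinv op s (A \<inter> B) \<in> q}"
      unfolding sinv_Int using uf_Int_iff[OF uq] by auto
    ultimately show "{s. sinv op s (A \<inter> B) \<in> q} \<in> p" by simp
  next
    fix A
    have "{s. sinv op s (- A) \<in> q} = - {s. sinv op s A \<in> q}"
    proof (rule set_eqI)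
      fix s
      have "sinv op s (- A) = phi op s \<inter> - sinv op s A" unfolding sinv_compl by blast
      then have "sinv op s (- A) \<in> q \<longleftrightarrow> - sinv op s A \<in> q"
        using uf_Int_iff[OF uq] deltaS_phi[OF q] by simp
      then show "s \<in> {s. sinv op s (- A) \<in> q} \<longleftrightarrow> s \<in> - {s. sinv op s A \<in> q}"
        using uf_compl[OF uq] by simp
    qed
    then show "{s. sinv op s A \<in> q} \<in> p \<or> {s. sinv op s (- A) \<in> q} \<in> p"
      using uf_compl[OF p, of "{s. sinv op s A \<in> q}"] by simp
  qed
qed

lemma ustar_delta:
  assumes ps: "psemigroup op" and p: "p \<in> deltaS op" and q: "q \<in> deltaS op"
  shows "ustar op p q \<in> deltaS op"
proof (rule deltaS_I)
  show "ultrafilter_on (ustar op p q)" using ustar_uf deltaS_uf p q by blast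
  fix x
  have uq: "ultrafilter_on q" using q deltaS_uf by blast
  have "phi op x \<subseteq> {s. sinv op s (phi op x) \<in> q}"
  proof
    fix s assume "s \<in> phi op x"
    then obtain u where u: "op x s = Some u" by (auto simp: phi_iff)
    have "sinv op s (phi op x) = sinv op s (sinv op x UNIV)" by (simp add: sinv_UNIV)
    also have "\<dots> = sinv op u UNIV" using sinv_assoc[OF ps u] .
    also have "\<dots> = phi op u" by (simp add: sinv_UNIV)
    finally show "s \<in> {s. sinv op s (phi op x) \<in> q}" using deltaS_phi[OF q] by simp
  qed
  then show "phi op x \<in> ustar op p q" unfolding ustar_iff
    using uf_mono[OF deltaS_uf[OF p] deltaS_phi[OF p]] by blast
qed

lemma ustar_assoc:
  assumes ps: "psemigroup op" and p: "p \<in> deltaS op" and q: "q \<in> deltaS op" and r: "r \<in> deltaS op"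
  shows "ustar op (ustar op p q) r = ustar op p (ustar op q r)"
proof (rule set_eqI)
  fix A
  have uq: "ultrafilter_on q" using q deltaS_uf by blast
  have "{x. sinv op x {s. sinv op s A \<in> r} \<in> q} = {x. {y. sinv op y (sinv op x A) \<in> r} \<in> q}"
  proof (rule set_eqI)
    fix x
    have "sinv op x {s. sinv op s A \<in> r} \<inter> phi op x = {y. sinv op y (sinv op x A) \<in> r} \<inter> phi op x"
    proof (rule set_eqI)
      fix y
      show "y \<in> sinv op x {s. sinv op s A \<in> r} \<inter> phi op x \<longleftrightarrow> y \<in> {y. sinv op y (sinv op x A) \<in> r} \<inter> phi op x"
      proof (cases "op x y")
        case None then show ?thesis by (simp add: phi_iff)
      next
        case (Some u)
        have e: "sinv op y (sinv op x A) = sinv op u A" using sinv_assoc[OF ps Some] .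
        have "y \<in> sinv op x {s. sinv op s A \<in> r} \<longleftrightarrow> sinv op u A \<in> r"
          unfolding sinv_iff Some by simp
        moreover have "y \<in> phi op x" unfolding phi_iff Some by simp
        ultimately show ?thesis using e by simp
      qed
    qed
    then show "x \<in> {x. sinv op x {s. sinv op s A \<in> r} \<in> q} \<longleftrightarrow> x \<in> {x. {y. sinv op y (sinv op x A) \<in> r} \<in> q}"
      using uf_eq_on[OF uq deltaS_phi[OF q], of "sinv op x {s. sinv op s A \<in> r}" x "{y. sinv op y (sinv op x A) \<in> r}"]
      by (simp only: mem_Collect_eq)
  qed
  then show "A \<in> ustar op (ustar op p q) r \<longleftrightarrow> A \<in> ustar op p (ustar op q r)"
    unfolding ustar_iff by simp
qed

definition closedU :: "'a set set set \<Rightarrow> bool" where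
  "closedU C \<longleftrightarrow> C \<subseteq> betaS \<and> (\<forall>p. ultrafilter_on p \<longrightarrow> (\<forall>A\<in>p. \<exists>c\<in>C. A \<in> c) \<longrightarrow> p \<in> C)"

definition Fil :: "'a set set set \<Rightarrow> 'a set set" where
  "Fil C = {A. \<forall>c\<in>C. A \<in> c}"

lemma closedUI: "C \<subseteq> betaS \<Longrightarrow> (\<And>p. ultrafilter_on p \<Longrightarrow> (\<forall>A\<in>p. \<exists>c\<in>C. A \<in> c) \<Longrightarrow> p \<in> C) \<Longrightarrow> closedU C"
  unfolding closedU_def by blast

lemma closedU_sub: "closedU C \<Longrightarrow> c \<in> C \<Longrightarrow> ultrafilter_on c"
  unfolding closedU_def betaS_def by blast

lemma closedU_D: "closedU C \<Longrightarrow> ultrafilter_on p \<Longrightarrow> (\<forall>A\<in>p. \<exists>c\<in>C. A \<in> c) \<Longrightarrow> p \<in> C"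
  unfolding closedU_def by blast

lemma closedU_Fil:
  assumes C: "closedU C" and p: "ultrafilter_on p" and F: "Fil C \<subseteq> p"
  shows "p \<in> C"
proof (rule closedU_D[OF C p], rule ballI)
  fix A assume A: "A \<in> p"
  show "\<exists>c\<in>C. A \<in> c"
  proof (rule ccontr)
    assume "\<not> (\<exists>c\<in>C. A \<in> c)"
    then have "\<forall>c\<in>C. - A \<in> c" using uf_compl[OF closedU_sub[OF C]] by blast
    then have "- A \<in> p" using F unfolding Fil_def by blast
    then show False using A uf_compl[OF p] by blast
  qed
qed

lemma Fil_iff: "A \<in> Fil C \<longleftrightarrow> (\<forall>c\<in>C. A \<in> c)" by (simp add: Fil_def)

lemma Fil_Int: assumes "\<forall>c\<in>C. ultrafilter_on c" "A \<in> Fil C" "B \<in> Fil C" shows "A \<inter> B \<in> Fil C"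
  unfolding Fil_iff
proof
  fix c assume c: "c \<in> C"
  then have "A \<in> c" "B \<in> c" "ultrafilter_on c" using assms unfolding Fil_iff by auto
  then show "A \<inter> B \<in> c" by (rule uf_Int[rotated -2])
qed

lemma Fil_UNIV: "\<forall>c\<in>C. ultrafilter_on c \<Longrightarrow> UNIV \<in> Fil C"
  unfolding Fil_iff by (auto intro: uf_UNIV)

lemma chain_inter:
  assumes ne: "\<CC> \<noteq> {}" and cl: "\<forall>C\<in>\<CC>. closedU C \<and> C \<noteq> {}"
    and ch: "\<forall>C\<in>\<CC>. \<forall>D\<in>\<CC>. C \<subseteq> D \<or> D \<subseteq> C"
  shows "\<Inter>\<CC> \<noteq> {}"
proof -
  define \<B> where "\<B> = (\<Union>C\<in>\<CC>. Fil C)"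
  have ufs: "\<And>C c. C \<in> \<CC> \<Longrightarrow> c \<in> C \<Longrightarrow> ultrafilter_on c" using cl closedU_sub by blast
  have "\<exists>p. ultrafilter_on p \<and> \<B> \<subseteq> p"
  proof (rule uf_extend)
    obtain C0 where C0: "C0 \<in> \<CC>" using ne by blast
    then have "UNIV \<in> Fil C0" using Fil_UNIV ufs by blast
    then show "\<B> \<noteq> {}" using C0 unfolding \<B>_def by blast
    show "\<forall>A\<in>\<B>. \<forall>B\<in>\<B>. \<exists>C\<in>\<B>. C \<subseteq> A \<inter> B"
    proof (intro ballI)
      fix A B assume "A \<in> \<B>" "B \<in> \<B>"
      then obtain C D where CD: "C \<in> \<CC>" "D \<in> \<CC>" "A \<in> Fil C" "B \<in> Fil D" unfolding \<B>_def by blast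
      from ch CD(1,2) have "C \<subseteq> D \<or> D \<subseteq> C" by blast
      then show "\<exists>C\<in>\<B>. C \<subseteq> A \<inter> B"
      proof
        assume "C \<subseteq> D"
        then have "B \<in> Fil C" using CD unfolding Fil_def by blast
        then have "A \<inter> B \<in> Fil C" using Fil_Int[of C A B] CD ufs by blast
        then show ?thesis using CD unfolding \<B>_def by blast
      next
        assume "D \<subseteq> C"
        then have "A \<in> Fil D" using CD unfolding Fil_def by blast
        then have "A \<inter> B \<in> Fil D" using Fil_Int[of D A B] CD ufs by blast
        then show ?thesis using CD unfolding \<B>_def by blast
      qed
    qed
    show "{} \<notin> \<B>"
    proof
      assume "{} \<in> \<B>"
      then obtain C where "C \<in> \<CC>" "{} \<in> Fil C" unfolding \<B>_def by blast
      moreover then obtain c where "c \<in> C" using cl by blast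
      ultimately have "{} \<in> c" "ultrafilter_on c" using ufs unfolding Fil_def by blast+
      then show False using uf_empty by blast
    qed
  qed
  then obtain p where p: "ultrafilter_on p" "\<B> \<subseteq> p" by blast
  have "\<forall>C\<in>\<CC>. p \<in> C"
  proof
    fix C assume "C \<in> \<CC>"
    then have "Fil C \<subseteq> p" using p(2) unfolding \<B>_def by blast
    then show "p \<in> C" using closedU_Fil[of C p] cl p(1) \<open>C \<in> \<CC>\<close> by blast
  qed
  then show ?thesis by blast
qed

lemma closedU_Inter:
  assumes "\<CC> \<noteq> {}" "\<forall>C\<in>\<CC>. closedU C" shows "closedU (\<Inter>\<CC>)"
proof (rule closedUI)
  show "\<Inter>\<CC> \<subseteq> betaS" using assms unfolding closedU_def by blast
  fix p assume p: "ultrafilter_on p" "\<forall>A\<in>p. \<exists>c\<in>\<Inter>\<CC>. A \<in> c"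
  show "p \<in> \<Inter>\<CC>"
  proof
    fix C assume C: "C \<in> \<CC>"
    have "\<forall>A\<in>p. \<exists>c\<in>C. A \<in> c" using p(2) C by blast
    then show "p \<in> C" using closedU_D assms(2) C p(1) by blast
  qed
qed

lemma closedU_Int: "closedU C \<Longrightarrow> closedU D \<Longrightarrow> closedU (C \<inter> D)"
  using closedU_Inter[of "{C, D}"] by simp

lemma min_closed:
  assumes P0: "P C0" and PC: "\<And>C. P C \<Longrightarrow> closedU C \<and> C \<noteq> {}"
    and chain: "\<And>\<CC>. \<CC> \<noteq> {} \<Longrightarrow> (\<forall>C\<in>\<CC>. P C) \<Longrightarrow> (\<forall>C\<in>\<CC>. \<forall>D\<in>\<CC>. C \<subseteq> D \<or> D \<subseteq> C)
       \<Longrightarrow> P (\<Inter>\<CC>)"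
  shows "\<exists>M. P M \<and> M \<subseteq> C0 \<and> (\<forall>C. P C \<and> C \<subseteq> M \<longrightarrow> C = M)"
proof -
  define \<A> where "\<A> = uminus ` {C. P C \<and> C \<subseteq> C0}"
  have "\<exists>M\<in>\<A>. \<forall>X\<in>\<A>. M \<subseteq> X \<longrightarrow> X = M"
  proof (rule subset_Zorn_nonempty)
    show "\<A> \<noteq> {}" using P0 unfolding \<A>_def by blast
  next
    fix \<CC> assume ne: "\<CC> \<noteq> {}" and ch: "subset.chain \<A> \<CC>"
    define \<DD> where "\<DD> = uminus ` \<CC>"
    have sub: "\<CC> \<subseteq> \<A>" using ch by (simp add: subset_chain_def)
    have D1: "\<forall>C\<in>\<DD>. P C \<and> C \<subseteq> C0"
    proof
      fix C assume "C \<in> \<DD>"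
      then obtain X where X: "X \<in> \<CC>" "C = - X" unfolding \<DD>_def by blast
      then obtain Y where "P Y \<and> Y \<subseteq> C0" "X = - Y" using sub unfolding \<A>_def by blast
      then show "P C \<and> C \<subseteq> C0" using X by simp
    qed
    have D2: "\<forall>C\<in>\<DD>. \<forall>D\<in>\<DD>. C \<subseteq> D \<or> D \<subseteq> C"
      using ch unfolding subset_chain_def \<DD>_def by blast
    have "P (\<Inter>\<DD>)" using chain[of \<DD>] D1 D2 ne unfolding \<DD>_def by blast
    moreover have "\<Inter>\<DD> \<subseteq> C0" using D1 ne unfolding \<DD>_def by blast
    moreover have "\<Union>\<CC> = - \<Inter>\<DD>" unfolding \<DD>_def by auto
    ultimately show "\<Union>\<CC> \<in> \<A>" unfolding \<A>_def by blast
  qed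
  then obtain M where M: "- M \<in> \<A>" "\<forall>X\<in>\<A>. - M \<subseteq> X \<longrightarrow> X = - M"
    by (metis \<A>_def double_complement image_iff)
  have PM: "P M \<and> M \<subseteq> C0" using M(1) unfolding \<A>_def
    by (metis (no_types, lifting) double_complement image_iff mem_Collect_eq)
  have "\<forall>C. P C \<and> C \<subseteq> M \<longrightarrow> C = M"
  proof (intro allI impI)
    fix C assume C: "P C \<and> C \<subseteq> M"
    then have "- C \<in> \<A>" using PM unfolding \<A>_def by blast
    moreover have "- M \<subseteq> - C" using C by blast
    ultimately have "- C = - M" using M(2) by blast
    then show "C = M" by simp
  qed
  then show ?thesis using PM by blast
qed

lemma delta_closed: "closedU (deltaS op)"
proof (rule closedUI)
  show "deltaS op \<subseteq> betaS" unfolding deltaS_def by blast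
  fix p assume p: "ultrafilter_on p" "\<forall>A\<in>p. \<exists>c\<in>deltaS op. A \<in> c"
  show "p \<in> deltaS op"
  proof (rule deltaS_I[OF p(1)])
    fix x show "phi op x \<in> p"
    proof (rule ccontr)
      assume "phi op x \<notin> p"
      then have "- phi op x \<in> p" using uf_compl[OF p(1)] by blast
      then obtain c where "c \<in> deltaS op" "- phi op x \<in> c" using p(2) by blast
      then show False using deltaS_phi[of c op x] uf_compl[OF deltaS_uf] by blast
    qed
  qed
qed

definition Eset :: "'a pop \<Rightarrow> 'a set set \<Rightarrow> 'a set \<Rightarrow> 'a set" where
  "Eset op q A = {s. sinv op s A \<in> q}"

lemma Eset_iff: "s \<in> Eset op q A \<longleftrightarrow> sinv op s A \<in> q" by (simp add: Eset_def)

lemma Eset_Int: assumes "ultrafilter_on q" shows "Eset op q (A \<inter> B) = Eset op q A \<inter> Eset op q B"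
proof (rule set_eqI)
  fix s show "s \<in> Eset op q (A \<inter> B) \<longleftrightarrow> s \<in> Eset op q A \<inter> Eset op q B"
    unfolding Eset_iff sinv_Int IntI Int_iff uf_Int_iff[OF assms] ..
qed

lemma Eset_UNIV: "q \<in> deltaS op \<Longrightarrow> Eset op q UNIV = UNIV"
  unfolding Eset_def sinv_UNIV by (simp add: deltaS_phi)

lemma rho_closed:
  assumes q: "q \<in> deltaS op" and C: "closedU C"
  shows "closedU ((\<lambda>c. ustar op c q) ` C)"
proof (rule closedUI)
  have uq: "ultrafilter_on q" using q deltaS_uf by blast
  show "(\<lambda>c. ustar op c q) ` C \<subseteq> betaS"
  proof
    fix x assume "x \<in> (\<lambda>c. ustar op c q) ` C"
    then obtain c where "c \<in> C" "x = ustar op c q" by blast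
    then show "x \<in> betaS" using ustar_uf[OF closedU_sub[OF C] q] unfolding betaS_def by simp
  qed
  fix p assume p: "ultrafilter_on p" "\<forall>A\<in>p. \<exists>c\<in>(\<lambda>c. ustar op c q) ` C. A \<in> c"
  have pc: "\<forall>A\<in>p. \<exists>c\<in>C. Eset op q A \<in> c"
  proof
    fix A assume "A \<in> p"
    then obtain c where "c \<in> C" "A \<in> ustar op c q" using p(2) by blast
    then show "\<exists>c\<in>C. Eset op q A \<in> c" unfolding Eset_def ustar_iff by blast
  qed
  define \<B> where "\<B> = {F \<inter> Eset op q A | F A. F \<in> Fil C \<and> A \<in> p}"
  have ufC: "\<forall>c\<in>C. ultrafilter_on c" using closedU_sub[OF C] by blast
  have "\<exists>c0. ultrafilter_on c0 \<and> \<B> \<subseteq> c0"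
  proof (rule uf_extend)
    show "\<B> \<noteq> {}" unfolding \<B>_def using Fil_UNIV[OF ufC] uf_UNIV[OF p(1)] by blast
    show "\<forall>A\<in>\<B>. \<forall>B\<in>\<B>. \<exists>C\<in>\<B>. C \<subseteq> A \<inter> B"
    proof (intro ballI)
      fix X Y assume "X \<in> \<B>" "Y \<in> \<B>"
      then obtain F1 A1 F2 A2 where FA: "X = F1 \<inter> Eset op q A1" "Y = F2 \<inter> Eset op q A2"
        "F1 \<in> Fil C" "F2 \<in> Fil C" "A1 \<in> p" "A2 \<in> p" unfolding \<B>_def by blast
      have "(F1 \<inter> F2) \<inter> Eset op q (A1 \<inter> A2) \<in> \<B>"
        unfolding \<B>_def using Fil_Int[OF ufC FA(3,4)] uf_Int[OF p(1) FA(5,6)] by blast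
      moreover have "(F1 \<inter> F2) \<inter> Eset op q (A1 \<inter> A2) \<subseteq> X \<inter> Y"
        unfolding FA Eset_Int[OF uq] by blast
      ultimately show "\<exists>C\<in>\<B>. C \<subseteq> X \<inter> Y" by blast
    qed
    show "{} \<notin> \<B>"
    proof
      assume "{} \<in> \<B>"
      then obtain F A where FA: "{} = F \<inter> Eset op q A" "F \<in> Fil C" "A \<in> p" unfolding \<B>_def by blast
      then obtain c where c: "c \<in> C" "Eset op q A \<in> c" using pc by blast
      then have "F \<in> c" using FA unfolding Fil_def by blast
      moreover have uc: "ultrafilter_on c" using ufC c(1) by blast
      ultimately have "F \<inter> Eset op q A \<in> c" using uf_Int c(2) by blast
      then show False using FA(1) uf_empty[OF uc] by simp
    qed
  qed
  then obtain c0 where c0: "ultrafilter_on c0" "\<B> \<subseteq> c0" by blast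
  have "Fil C \<subseteq> c0"
  proof
    fix F assume "F \<in> Fil C"
    then have "F \<inter> Eset op q UNIV \<in> \<B>" unfolding \<B>_def using uf_UNIV[OF p(1)] by blast
    then show "F \<in> c0" using c0(2) Eset_UNIV[OF q] by auto
  qed
  then have c0C: "c0 \<in> C" using closedU_Fil[OF C c0(1)] by blast
  have "p \<subseteq> ustar op c0 q"
  proof
    fix A assume "A \<in> p"
    then have "UNIV \<inter> Eset op q A \<in> \<B>" unfolding \<B>_def using Fil_UNIV[OF ufC] by blast
    then have "Eset op q A \<in> c0" using c0(2) by auto
    then show "A \<in> ustar op c0 q" unfolding Eset_def ustar_iff by simp
  qed
  then have "p = ustar op c0 q" using uf_sub_eq[OF p(1) ustar_uf[OF c0(1) q]] by blast
  then show "p \<in> (\<lambda>c. ustar op c q) ` C" using c0C by blast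
qed

lemma fix_closed:
  assumes q: "q \<in> deltaS op" and C: "closedU C" and r: "ultrafilter_on r"
  shows "closedU {c\<in>C. ustar op c q = r}"
proof (rule closedUI)
  show "{c\<in>C. ustar op c q = r} \<subseteq> betaS" using C unfolding closedU_def by blast
  fix p assume p: "ultrafilter_on p" "\<forall>A\<in>p. \<exists>c\<in>{c\<in>C. ustar op c q = r}. A \<in> c"
  then have "p \<in> C" using closedU_D[OF C p(1)] by blast
  moreover have "ustar op p q \<subseteq> r"
  proof
    fix B assume "B \<in> ustar op p q"
    then have "Eset op q B \<in> p" unfolding Eset_def ustar_iff .
    then obtain c where "c \<in> C" "ustar op c q = r" "Eset op q B \<in> c" using p(2) by blast
    then have "B \<in> ustar op c q" unfolding Eset_def ustar_iff by simp
    then show "B \<in> r" using \<open>ustar op c q = r\<close> by simp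
  qed
  then have "ustar op p q = r" using uf_sub_eq[OF ustar_uf[OF p(1) q] r] by blast
  ultimately show "p \<in> {c\<in>C. ustar op c q = r}" by blast
qed

lemma rho_sub: "(\<lambda>c. ustar op c x) ` C \<subseteq> M \<longleftrightarrow> (\<forall>c\<in>C. ustar op c x \<in> M)" by blast

lemma ellis:
  assumes ps: "psemigroup op" and X: "closedU X" "X \<noteq> {}" "X \<subseteq> deltaS op"
    and sg: "\<forall>x\<in>X. \<forall>y\<in>X. ustar op x y \<in> X"
  shows "\<exists>e\<in>X. ustar op e e = e"
proof -
  define P where "P C \<longleftrightarrow> closedU C \<and> C \<noteq> {} \<and> C \<subseteq> X \<and> (\<forall>x\<in>C. \<forall>y\<in>C. ustar op x y \<in> C)" for C
  have "\<exists>M. P M \<and> M \<subseteq> X \<and> (\<forall>C. P C \<and> C \<subseteq> M \<longrightarrow> C = M)"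
  proof (rule min_closed)
    show "P X" unfolding P_def using X sg by blast
    show "\<And>C. P C \<Longrightarrow> closedU C \<and> C \<noteq> {}" unfolding P_def by blast
    fix \<CC> assume ne: "\<CC> \<noteq> {}" and PC: "\<forall>C\<in>\<CC>. P C" and ch: "\<forall>C\<in>\<CC>. \<forall>D\<in>\<CC>. C \<subseteq> D \<or> D \<subseteq> C"
    have cl: "\<forall>C\<in>\<CC>. closedU C" "\<forall>C\<in>\<CC>. closedU C \<and> C \<noteq> {}" using PC unfolding P_def by blast+
    have "closedU (\<Inter>\<CC>)" using closedU_Inter[OF ne cl(1)] .
    moreover have "\<Inter>\<CC> \<noteq> {}" using chain_inter[OF ne cl(2) ch] .
    moreover have "\<Inter>\<CC> \<subseteq> X" using ne PC unfolding P_def by blast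
    moreover have "\<forall>x\<in>\<Inter>\<CC>. \<forall>y\<in>\<Inter>\<CC>. ustar op x y \<in> \<Inter>\<CC>" using PC unfolding P_def by blast
    ultimately show "P (\<Inter>\<CC>)" unfolding P_def by blast
  qed
  then obtain M where PM: "P M" and minM: "\<forall>C. P C \<and> C \<subseteq> M \<longrightarrow> C = M" by blast
  have Mc: "closedU M" and Mne: "M \<noteq> {}" and MX: "M \<subseteq> X" and Msg: "\<forall>x\<in>M. \<forall>y\<in>M. ustar op x y \<in> M"
    using PM unfolding P_def by blast+
  have Md: "M \<subseteq> deltaS op" using MX X(3) by blast
  obtain x where xM: "x \<in> M" using Mne by blast
  have xd: "x \<in> deltaS op" using xM Md by blast
  have ux: "ultrafilter_on x" using deltaS_uf[OF xd] .
  define Mx where "Mx = (\<lambda>c. ustar op c x) ` M"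
  have "P Mx" unfolding P_def
  proof (intro conjI)
    show "closedU Mx" unfolding Mx_def using rho_closed[OF xd Mc] .
    show "Mx \<noteq> {}" unfolding Mx_def using Mne by blast
    show "Mx \<subseteq> X" unfolding Mx_def using Msg xM MX by blast
    show "\<forall>a\<in>Mx. \<forall>b\<in>Mx. ustar op a b \<in> Mx"
    proof (intro ballI)
      fix a b assume "a \<in> Mx" "b \<in> Mx"
      then obtain a' b' where ab: "a' \<in> M" "b' \<in> M" "a = ustar op a' x" "b = ustar op b' x" unfolding Mx_def by blast
      have d: "a' \<in> deltaS op" "b' \<in> deltaS op" using ab Md by blast+
      have "ustar op a b = ustar op (ustar op (ustar op a' x) b') x"
        unfolding ab using ustar_assoc[OF ps ustar_delta[OF ps d(1) xd] d(2) xd] by simp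
      moreover have "ustar op (ustar op a' x) b' \<in> M" using Msg ab xM by blast
      ultimately show "ustar op a b \<in> Mx" unfolding Mx_def by blast
    qed
  qed
  moreover have "Mx \<subseteq> M" unfolding Mx_def using Msg xM by blast
  ultimately have "Mx = M" using minM by blast
  then have "x \<in> (\<lambda>c. ustar op c x) ` M" using xM unfolding Mx_def by simp
  then obtain y where yM: "y \<in> M" and yx0: "x = ustar op y x" by (rule imageE)
  then have yx: "ustar op y x = x" by simp
  define N where "N = {c\<in>M. ustar op c x = x}"
  have "P N" unfolding P_def
  proof (intro conjI)
    show "closedU N" unfolding N_def using fix_closed[OF xd Mc ux] .
    show "N \<noteq> {}" unfolding N_def using yM yx by blast
    show "N \<subseteq> X" unfolding N_def using MX by blast
    show "\<forall>a\<in>N. \<forall>b\<in>N. ustar op a b \<in> N"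
    proof (intro ballI)
      fix a b assume ab: "a \<in> N" "b \<in> N"
      then have d: "a \<in> deltaS op" "b \<in> deltaS op" unfolding N_def using Md by blast+
      have "ustar op (ustar op a b) x = ustar op a (ustar op b x)" using ustar_assoc[OF ps d xd] .
      also have "\<dots> = x" using ab unfolding N_def by simp
      finally show "ustar op a b \<in> N" using ab Msg unfolding N_def by blast
    qed
  qed
  moreover have "N \<subseteq> M" unfolding N_def by blast
  ultimately have "N = M" using minM by blast
  then have "ustar op x x = x" using xM unfolding N_def by blast
  then show ?thesis using xM MX by blast
qed

lemma sigma_Un: "sigma op (H1 \<union> H2) = sigma op H1 \<inter> sigma op H2"
  unfolding sigma_def by blast

lemma sigma_single: "sigma op {x} = phi op x" unfolding sigma_def by simp

lemma delta_nonempty: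
  assumes ad: "adequate op" shows "deltaS op \<noteq> {}"
proof -
  define \<B> where "\<B> = {sigma op H | H. finite H \<and> H \<noteq> {}}"
  have "\<exists>p. ultrafilter_on p \<and> \<B> \<subseteq> p"
  proof (rule uf_extend)
    show "\<B> \<noteq> {}" unfolding \<B>_def by blast
    show "\<forall>A\<in>\<B>. \<forall>B\<in>\<B>. \<exists>C\<in>\<B>. C \<subseteq> A \<inter> B"
    proof (intro ballI)
      fix A B assume "A \<in> \<B>" "B \<in> \<B>"
      then obtain H1 H2 where "A = sigma op H1" "B = sigma op H2" "finite H1" "H1 \<noteq> {}" "finite H2" "H2 \<noteq> {}"
        unfolding \<B>_def by blast
      then have "finite (H1 \<union> H2) \<and> H1 \<union> H2 \<noteq> {}" by simp
      then have "sigma op (H1 \<union> H2) \<in> \<B>" unfolding \<B>_def by blast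
      moreover have "sigma op (H1 \<union> H2) \<subseteq> A \<inter> B" unfolding sigma_Un using \<open>A = _\<close> \<open>B = _\<close> by simp
      ultimately show "\<exists>C\<in>\<B>. C \<subseteq> A \<inter> B" by blast
    qed
    show "{} \<notin> \<B>" using ad unfolding \<B>_def adequate_def by auto
  qed
  then obtain p where p: "ultrafilter_on p" "\<B> \<subseteq> p" by blast
  have "p \<in> deltaS op"
  proof (rule deltaS_I[OF p(1)])
    fix x have "sigma op {x} \<in> \<B>" unfolding \<B>_def by blast
    then show "phi op x \<in> p" using p(2) sigma_single by (metis subsetD)
  qed
  then show ?thesis by blast
qed

lemma Kmin_exists:
  assumes ps: "psemigroup op" and ad: "adequate op"
  shows "is_ideal op (Kmin op) \<and> (\<forall>J. is_ideal op J \<longrightarrow> Kmin op \<subseteq> J)"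
proof -
  let ?D = "deltaS op"
  define P where "P C \<longleftrightarrow> closedU C \<and> C \<noteq> {} \<and> C \<subseteq> ?D \<and> (\<forall>p\<in>?D. \<forall>x\<in>C. ustar op p x \<in> C)" for C
  have "\<exists>M. P M \<and> M \<subseteq> ?D \<and> (\<forall>C. P C \<and> C \<subseteq> M \<longrightarrow> C = M)"
  proof (rule min_closed)
    show "P ?D" unfolding P_def using delta_closed delta_nonempty[OF ad] ustar_delta[OF ps] by blast
    show "\<And>C. P C \<Longrightarrow> closedU C \<and> C \<noteq> {}" unfolding P_def by blast
    fix \<CC> assume ne: "\<CC> \<noteq> {}" and PC: "\<forall>C\<in>\<CC>. P C" and ch: "\<forall>C\<in>\<CC>. \<forall>D\<in>\<CC>. C \<subseteq> D \<or> D \<subseteq> C"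
    have cl: "\<forall>C\<in>\<CC>. closedU C" "\<forall>C\<in>\<CC>. closedU C \<and> C \<noteq> {}" using PC unfolding P_def by blast+
    have "closedU (\<Inter>\<CC>)" using closedU_Inter[OF ne cl(1)] .
    moreover have "\<Inter>\<CC> \<noteq> {}" using chain_inter[OF ne cl(2) ch] .
    moreover have "\<Inter>\<CC> \<subseteq> ?D" using ne PC unfolding P_def by blast
    moreover have "\<forall>p\<in>?D. \<forall>x\<in>\<Inter>\<CC>. ustar op p x \<in> \<Inter>\<CC>" using PC unfolding P_def by blast
    ultimately show "P (\<Inter>\<CC>)" unfolding P_def by blast
  qed
  then obtain L where PL: "P L" and minL: "\<forall>C. P C \<and> C \<subseteq> L \<longrightarrow> C = L" by blast
  have Lc: "closedU L" and Lne: "L \<noteq> {}" and LD: "L \<subseteq> ?D" and Lid: "\<forall>p\<in>?D. \<forall>x\<in>L. ustar op p x \<in> L"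
    using PL unfolding P_def by blast+
  have Lx: "(\<lambda>c. ustar op c x) ` ?D = L" if xL: "x \<in> L" for x
  proof -
    have xd: "x \<in> ?D" using xL LD by blast
    have "P ((\<lambda>c. ustar op c x) ` ?D)" unfolding P_def
    proof (intro conjI)
      show "closedU ((\<lambda>c. ustar op c x) ` ?D)" using rho_closed[OF xd delta_closed] .
      show "(\<lambda>c. ustar op c x) ` ?D \<noteq> {}" using delta_nonempty[OF ad] by blast
      show "(\<lambda>c. ustar op c x) ` ?D \<subseteq> ?D" using ustar_delta[OF ps _ xd] by blast
      show "\<forall>p\<in>?D. \<forall>y\<in>(\<lambda>c. ustar op c x) ` ?D. ustar op p y \<in> (\<lambda>c. ustar op c x) ` ?D"
      proof (intro ballI)
        fix p y assume p: "p \<in> ?D" and "y \<in> (\<lambda>c. ustar op c x) ` ?D"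
        then obtain c where c: "c \<in> ?D" "y = ustar op c x" by blast
        have "ustar op p y = ustar op (ustar op p c) x" unfolding c(2) using ustar_assoc[OF ps p c(1) xd] by simp
        moreover have "ustar op p c \<in> ?D" using ustar_delta[OF ps p c(1)] .
        ultimately show "ustar op p y \<in> (\<lambda>c. ustar op c x) ` ?D" by blast
      qed
    qed
    moreover have "(\<lambda>c. ustar op c x) ` ?D \<subseteq> L" using Lid xL by blast
    ultimately show ?thesis using minL by blast
  qed
  define K where "K = {ustar op l s | l s. l \<in> L \<and> s \<in> ?D}"
  have Kid: "is_ideal op K" unfolding is_ideal_def
  proof (intro conjI)
    show "K \<noteq> {}" unfolding K_def using Lne LD by blast
    show "K \<subseteq> ?D" unfolding K_def using ustar_delta[OF ps] LD by blast
    show "\<forall>p\<in>?D. \<forall>q\<in>K. ustar op p q \<in> K \<and> ustar op q p \<in> K"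
    proof (intro ballI conjI)
      fix p q assume p: "p \<in> ?D" and "q \<in> K"
      then obtain l s where ls: "l \<in> L" "s \<in> ?D" "q = ustar op l s" unfolding K_def by blast
      have ld: "l \<in> ?D" using ls LD by blast
      have "ustar op p q = ustar op (ustar op p l) s" unfolding ls(3) using ustar_assoc[OF ps p ld ls(2)] by simp
      moreover have "ustar op p l \<in> L" using Lid p ls by blast
      ultimately show "ustar op p q \<in> K" unfolding K_def using ls by blast
      have "ustar op q p = ustar op l (ustar op s p)" unfolding ls(3) using ustar_assoc[OF ps ld ls(2) p] by simp
      moreover have "ustar op s p \<in> ?D" using ustar_delta[OF ps ls(2) p] .
      ultimately show "ustar op q p \<in> K" unfolding K_def using ls by blast
    qed
  qed
  have Kmin: "K \<subseteq> J" if J: "is_ideal op J" for J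
  proof -
    obtain j where j: "j \<in> J" using J unfolding is_ideal_def by blast
    obtain l where l: "l \<in> L" using Lne by blast
    have jd: "j \<in> ?D" using j J unfolding is_ideal_def by blast
    have ld: "l \<in> ?D" using l LD by blast
    define x where "x = ustar op j l"
    have xJ: "x \<in> J" unfolding x_def using J j ld unfolding is_ideal_def by blast
    have xL: "x \<in> L" unfolding x_def using Lid jd l by blast
    have LJ: "L \<subseteq> J"
    proof
      fix y assume "y \<in> L"
      then obtain c where c: "c \<in> ?D" "y = ustar op c x" using Lx[OF xL] by blast
      then show "y \<in> J" using J xJ unfolding is_ideal_def by blast
    qed
    show "K \<subseteq> J"
    proof
      fix z assume "z \<in> K"
      then obtain l s where "l \<in> L" "s \<in> ?D" "z = ustar op l s" unfolding K_def by blast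
      then show "z \<in> J" using LJ J unfolding is_ideal_def by blast
    qed
  qed
  have "Kmin op = K" unfolding Kmin_def
  proof (rule the_equality)
    show "is_ideal op K \<and> (\<forall>J. is_ideal op J \<longrightarrow> K \<subseteq> J)" using Kid Kmin by blast
    fix K' assume "is_ideal op K' \<and> (\<forall>J. is_ideal op J \<longrightarrow> K' \<subseteq> J)"
    then show "K' = K" using Kid Kmin by blast
  qed
  then show ?thesis using Kid Kmin by simp
qed

lemma sigma_iff: "t \<in> sigma op W \<longleftrightarrow> (\<forall>w\<in>W. op w t \<noteq> None)"
  by (simp add: sigma_def phi_def)

lemma Wmul_iff: "c \<in> Wmul op W a \<longleftrightarrow> (\<exists>w\<in>W. op w a = Some c)"
  by (simp add: Wmul_def)

lemma Wmul_finite: assumes "finite W" shows "finite (Wmul op W a)"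
proof -
  have "Wmul op W a \<subseteq> (\<lambda>w. the (op w a)) ` W" unfolding Wmul_def by force
  then show ?thesis using assms finite_subset by blast
qed

lemma sigma_in_delta: assumes r: "r \<in> deltaS op" and W: "finite W" shows "sigma op W \<in> r"
proof -
  have "(\<Inter>w\<in>W. phi op w) \<in> r" using uf_Inter_fin[OF deltaS_uf[OF r] W] deltaS_phi[OF r] by blast
  then show ?thesis unfolding sigma_def .
qed

lemma Jdelta_delta: "r \<in> Jdelta op \<Longrightarrow> r \<in> deltaS op" by (simp add: Jdelta_def)
lemma Jdelta_set_of: "r \<in> Jdelta op \<Longrightarrow> B \<in> r \<Longrightarrow> Jdelta_set op B" by (simp add: Jdelta_def)

lemma Jdelta_mult:
  assumes ps: "psemigroup op" and r1: "r1 \<in> deltaS op" and r2: "r2 \<in> Jdelta op"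
  shows "ustar op r1 r2 \<in> Jdelta op"
proof -
  have r2d: "r2 \<in> deltaS op" using Jdelta_delta[OF r2] .
  have u1: "ultrafilter_on r1" using deltaS_uf[OF r1] .
  have "Jdelta_set op A" if A: "A \<in> ustar op r1 r2" for A
    unfolding Jdelta_set_def
  proof (intro ballI)
    fix F :: "(nat \<Rightarrow> 'a) set" and W :: "'a set" assume F: "F \<in> Pf (TS op)" and W: "W \<in> Pf UNIV"
    have Wf: "finite W" and Wne: "W \<noteq> {}" using W unfolding Pf_def by auto
    have "{s. sinv op s A \<in> r2} \<in> r1" using A unfolding ustar_iff .
    moreover have "sigma op W \<in> r1" using sigma_in_delta[OF r1 Wf] .
    ultimately have "{s. sinv op s A \<in> r2} \<inter> sigma op W \<in> r1" using uf_Int[OF u1] by blast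
    then obtain s where s1: "sinv op s A \<in> r2" and s2: "s \<in> sigma op W"
      using uf_nonempty[OF u1] by blast
    have JB: "Jdelta_set op (sinv op s A)" using Jdelta_set_of[OF r2 s1] .
    define W' where "W' = insert s (Wmul op W s)"
    have W': "W' \<in> Pf UNIV" unfolding W'_def Pf_def using Wmul_finite[OF Wf] by simp
    obtain a H where a: "a \<in> sigma op W'" and H: "H \<in> Pf UNIV"
      and aH: "\<forall>f\<in>F. the (pprod op f H) \<in> sigma op (Wmul op W' a) \<and>
                      op a (the (pprod op f H)) \<in> Some ` (sinv op s A)"
      using JB F W' unfolding Jdelta_set_def by blast
    have "op s a \<noteq> None" using a unfolding W'_def sigma_iff by simp
    then obtain a' where a': "op s a = Some a'" by blast
    have wa: "op w a' = op ws a" if "op w s = Some ws" for w ws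
      using assoc_some[OF ps that, of a] a' by simp
    have a'W: "a' \<in> sigma op W"
      unfolding sigma_iff
    proof
      fix w assume w: "w \<in> W"
      then obtain ws where ws: "op w s = Some ws" using s2 unfolding sigma_iff by blast
      then have "ws \<in> W'" unfolding W'_def using w by (auto simp: Wmul_iff)
      then have "op ws a \<noteq> None" using a unfolding sigma_iff by blast
      then show "op w a' \<noteq> None" using wa[OF ws] by simp
    qed
    have "\<forall>f\<in>F. the (pprod op f H) \<in> sigma op (Wmul op W a') \<and>
                      op a' (the (pprod op f H)) \<in> Some ` A"
    proof
      fix f assume f: "f \<in> F"
      define y where "y = the (pprod op f H)"
      have y1: "y \<in> sigma op (Wmul op W' a)" and y2: "op a y \<in> Some ` (sinv op s A)"
        using aH f unfolding y_def by blast+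
      have "y \<in> sigma op (Wmul op W a')"
        unfolding sigma_iff
      proof
        fix c assume "c \<in> Wmul op W a'"
        then obtain w where w: "w \<in> W" "op w a' = Some c" unfolding Wmul_iff by blast
        then obtain ws where ws: "op w s = Some ws" using s2 unfolding sigma_iff by blast
        then have "ws \<in> W'" unfolding W'_def using w by (auto simp: Wmul_iff)
        moreover have "op ws a = Some c" using wa[OF ws] w(2) by simp
        ultimately have "c \<in> Wmul op W' a" unfolding Wmul_iff by blast
        then show "op c y \<noteq> None" using y1 unfolding sigma_iff by blast
      qed
      moreover have "op a' y \<in> Some ` A"
      proof -
        obtain b where b: "op a y = Some b" "b \<in> sinv op s A" using y2 by blast
        then have "op s b \<noteq> None" "the (op s b) \<in> A" unfolding sinv_iff by auto
        moreover have "op a' y = op s b" using assoc_some[OF ps a', of y] b(1) by simp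
        ultimately show ?thesis by auto
      qed
      ultimately show "the (pprod op f H) \<in> sigma op (Wmul op W a') \<and>
                      op a' (the (pprod op f H)) \<in> Some ` A" unfolding y_def by blast
    qed
    then show "\<exists>a\<in>sigma op W. \<exists>H\<in>Pf UNIV. \<forall>f\<in>F. the (pprod op f H) \<in> sigma op (Wmul op W a) \<and>
                      op a (the (pprod op f H)) \<in> Some ` A" using a'W H by blast
  qed
  moreover have "ustar op r1 r2 \<in> deltaS op" using ustar_delta[OF ps r1 r2d] .
  ultimately show ?thesis unfolding Jdelta_def by blast
qed

lemma htilde_iff: "B \<in> htilde h p \<longleftrightarrow> h -` B \<in> p" by (simp add: htilde_def)

lemma htilde_hom:
  assumes hom: "phom opS opT h" and p: "p \<in> deltaS opS" and q: "q \<in> deltaS opS"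
  shows "htilde h (ustar opS p q) = ustar opT (htilde h p) (htilde h q)"
proof (rule set_eqI)
  fix B
  have uq: "ultrafilter_on q" using deltaS_uf[OF q] .
  have eq: "{s. sinv opS s (h -` B) \<in> q} = {s. h -` (sinv opT (h s) B) \<in> q}"
  proof (rule set_eqI)
    fix s
    have "sinv opS s (h -` B) \<inter> phi opS s = h -` (sinv opT (h s) B) \<inter> phi opS s"
    proof (rule set_eqI)
      fix t
      show "t \<in> sinv opS s (h -` B) \<inter> phi opS s \<longleftrightarrow> t \<in> h -` (sinv opT (h s) B) \<inter> phi opS s"
        proof (cases "opS s t")
          case None then show ?thesis by (simp add: phi_iff)
        next
          case (Some v)
          then have "t \<in> phi opS s" by (simp add: phi_iff)
          then have "opT (h s) (h t) = map_option h (opS s t)" using hom unfolding phom_def by blast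
          then have "opT (h s) (h t) = Some (h v)" using Some by simp
          then show ?thesis using Some by (simp add: phi_iff sinv_iff)
        qed
    qed
    then show "s \<in> {s. sinv opS s (h -` B) \<in> q} \<longleftrightarrow> s \<in> {s. h -` (sinv opT (h s) B) \<in> q}"
      using uf_eq_on[OF uq deltaS_phi[OF q], of "sinv opS s (h -` B)" s "h -` (sinv opT (h s) B)"]
      by (simp only: mem_Collect_eq)
  qed
  have "B \<in> ustar opT (htilde h p) (htilde h q) \<longleftrightarrow> {s. h -` (sinv opT (h s) B) \<in> q} \<in> p"
    unfolding ustar_iff htilde_iff by (simp add: vimage_def)
  then show "B \<in> htilde h (ustar opS p q) \<longleftrightarrow> B \<in> ustar opT (htilde h p) (htilde h q)"
    unfolding htilde_iff ustar_iff eq by simp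
qed

lemma fiber_closed:
  assumes p: "ultrafilter_on p"
  shows "closedU {r\<in>deltaS opS. htilde h r = p}"
proof (rule closedUI)
  show "{r\<in>deltaS opS. htilde h r = p} \<subseteq> betaS" unfolding deltaS_def by blast
  fix r assume r: "ultrafilter_on r" "\<forall>A\<in>r. \<exists>c\<in>{r\<in>deltaS opS. htilde h r = p}. A \<in> c"
  have "\<forall>A\<in>r. \<exists>c\<in>deltaS opS. A \<in> c"
  proof
    fix A assume "A \<in> r"
    then obtain c where "c \<in> {r\<in>deltaS opS. htilde h r = p}" "A \<in> c" using r(2) by blast
    then show "\<exists>c\<in>deltaS opS. A \<in> c" by blast
  qed
  then have "r \<in> deltaS opS" using closedU_D[OF delta_closed r(1)] by blast
  moreover have "htilde h r = p"
  proof (rule set_eqI)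
    fix B
    show "B \<in> htilde h r \<longleftrightarrow> B \<in> p"
    proof
      assume "B \<in> htilde h r"
      then have "h -` B \<in> r" unfolding htilde_iff .
      then obtain c where c: "htilde h c = p" "h -` B \<in> c" using r(2) by blast
      then have "B \<in> htilde h c" unfolding htilde_iff by simp
      then show "B \<in> p" using c(1) by simp
    next
      assume B: "B \<in> p"
      show "B \<in> htilde h r"
      proof (rule ccontr)
        assume "B \<notin> htilde h r"
        then have "h -` B \<notin> r" unfolding htilde_iff .
        then have "- (h -` B) \<in> r" using uf_compl[OF r(1)] by blast
        then have "h -` (- B) \<in> r" by (simp add: vimage_Compl)
        then obtain c where c: "htilde h c = p" "h -` (- B) \<in> c" using r(2) by blast
        then have "- B \<in> htilde h c" unfolding htilde_iff by simp
        then have "- B \<in> p" using c(1) by simp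
        then show False using B uf_compl[OF p] by blast
      qed
    qed
  qed
  ultimately show "r \<in> {r\<in>deltaS opS. htilde h r = p}" by blast
qed

lemma Jdelta_closed: "closedU (Jdelta op)"
proof (rule closedUI)
  show "Jdelta op \<subseteq> betaS" unfolding Jdelta_def deltaS_def by blast
  fix r assume r: "ultrafilter_on r" "\<forall>A\<in>r. \<exists>c\<in>Jdelta op. A \<in> c"
  have "\<forall>A\<in>r. \<exists>c\<in>deltaS op. A \<in> c" using r(2) Jdelta_delta by blast
  then have "r \<in> deltaS op" using closedU_D[OF delta_closed r(1)] by blast
  moreover have "\<forall>B\<in>r. Jdelta_set op B" using r(2) Jdelta_set_of by blast
  ultimately show "r \<in> Jdelta op" unfolding Jdelta_def by blast
qed

lemma idem_exists:
  assumes ps: "psemigroup opS" and hom: "phom opS opT h"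
    and q: "q \<in> Jdelta opS" and hq: "htilde h q = p" and pp: "ustar opT p p = p"
  shows "\<exists>r\<in>Jdelta opS. ustar opS r r = r \<and> htilde h r = p"
proof -
  have qd: "q \<in> deltaS opS" using Jdelta_delta[OF q] .
  have up: "ultrafilter_on p"
  proof -
    have uq: "ultrafilter_on q" using deltaS_uf[OF qd] .
    have "ultrafilter_on (htilde h q)" unfolding ultrafilter_on_def htilde_iff
    proof (intro conjI allI impI)
      show "h -` UNIV \<in> q" using uf_UNIV[OF uq] by simp
      show "h -` {} \<notin> q" using uf_empty[OF uq] by simp
    next
      fix A B assume "h -` A \<in> q \<and> A \<subseteq> B"
      then show "h -` B \<in> q" using uf_mono[OF uq, of "h -` A" "h -` B"] by blast
    next
      fix A B assume "h -` A \<in> q \<and> h -` B \<in> q"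
      then show "h -` (A \<inter> B) \<in> q" using uf_Int[OF uq, of "h -` A" "h -` B"] by (simp add: vimage_Int)
    next
      fix A show "h -` A \<in> q \<or> h -` (- A) \<in> q" using uf_compl[OF uq, of "h -` A"] by (simp add: vimage_Compl)
    qed
    then show ?thesis using hq by simp
  qed
  define X where "X = Jdelta opS \<inter> {r\<in>deltaS opS. htilde h r = p}"
  have "\<exists>e\<in>X. ustar opS e e = e"
  proof (rule ellis[OF ps])
    show "closedU X" unfolding X_def using closedU_Int[OF Jdelta_closed fiber_closed[OF up]] .
    show "X \<noteq> {}" unfolding X_def using q qd hq by blast
    show "X \<subseteq> deltaS opS" unfolding X_def by blast
    show "\<forall>x\<in>X. \<forall>y\<in>X. ustar opS x y \<in> X"
    proof (intro ballI)
      fix x y assume x: "x \<in> X" and y: "y \<in> X"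
      have xd: "x \<in> deltaS opS" and yd: "y \<in> deltaS opS" using x y unfolding X_def by blast+
      have "ustar opS x y \<in> Jdelta opS" using Jdelta_mult[OF ps xd] y unfolding X_def by blast
      moreover have "htilde h (ustar opS x y) = p" using htilde_hom[OF hom xd yd] x y pp unfolding X_def by simp
      moreover have "ustar opS x y \<in> deltaS opS" using ustar_delta[OF ps xd yd] .
      ultimately show "ustar opS x y \<in> X" unfolding X_def by blast
    qed
  qed
  then show ?thesis unfolding X_def by blast
qed

lemma noncentral:
  assumes psS: "psemigroup opS" and adS: "adequate opS" and psT: "psemigroup opT" and adT: "adequate opT"
    and hom: "phom opS opT h" and img: "htilde h ` deltaS opS = deltaS opT"
    and nc: "\<not> central opT A"
  shows "\<not> central opS (h -` A)"
proof
  assume "central opS (h -` A)"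
  then obtain q where qK: "q \<in> Kmin opS" and qq: "ustar opS q q = q" and qA: "h -` A \<in> q"
    unfolding central_def by blast
  have KS: "is_ideal opS (Kmin opS)" "\<forall>J. is_ideal opS J \<longrightarrow> Kmin opS \<subseteq> J" using Kmin_exists[OF psS adS] by blast+
  have KT: "is_ideal opT (Kmin opT)" using Kmin_exists[OF psT adT] by blast
  define I where "I = {x\<in>deltaS opS. htilde h x \<in> Kmin opT}"
  have "is_ideal opS I" unfolding is_ideal_def
  proof (intro conjI)
    obtain t where t: "t \<in> Kmin opT" using KT unfolding is_ideal_def by blast
    then have "t \<in> deltaS opT" using KT unfolding is_ideal_def by blast
    then have "t \<in> htilde h ` deltaS opS" using img by simp
    then obtain x where "x \<in> deltaS opS" "t = htilde h x" by (rule imageE)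
    then show "I \<noteq> {}" unfolding I_def using t by auto
    show "I \<subseteq> deltaS opS" unfolding I_def by blast
    show "\<forall>p\<in>deltaS opS. \<forall>q\<in>I. ustar opS p q \<in> I \<and> ustar opS q p \<in> I"
    proof (intro ballI conjI)
      fix p x assume p: "p \<in> deltaS opS" and x: "x \<in> I"
      have xd: "x \<in> deltaS opS" and xK: "htilde h x \<in> Kmin opT" using x unfolding I_def by blast+
      have hp: "htilde h p \<in> deltaS opT" using img p by blast
      have "htilde h (ustar opS p x) = ustar opT (htilde h p) (htilde h x)" using htilde_hom[OF hom p xd] .
      moreover have "ustar opT (htilde h p) (htilde h x) \<in> Kmin opT" using KT hp xK unfolding is_ideal_def by blast
      ultimately show "ustar opS p x \<in> I" unfolding I_def using ustar_delta[OF psS p xd] by simp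
      have "htilde h (ustar opS x p) = ustar opT (htilde h x) (htilde h p)" using htilde_hom[OF hom xd p] .
      moreover have "ustar opT (htilde h x) (htilde h p) \<in> Kmin opT" using KT hp xK unfolding is_ideal_def by blast
      ultimately show "ustar opS x p \<in> I" unfolding I_def using ustar_delta[OF psS xd p] by simp
    qed
  qed
  then have "q \<in> I" using KS(2) qK by blast
  then have qd: "q \<in> deltaS opS" and hK: "htilde h q \<in> Kmin opT" unfolding I_def by blast+
  have "ustar opT (htilde h q) (htilde h q) = htilde h q" using htilde_hom[OF hom qd qd] qq by simp
  moreover have "A \<in> htilde h q" using qA unfolding htilde_iff .
  ultimately have "central opT A" unfolding central_def using hK by blast
  then show False using nc by blast
qed

lemma oprod_single[simp]: "oprod op [y] = y" by simp

lemma oprod_snoc: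
  assumes "xs \<noteq> []"
  shows "oprod op (xs @ [y]) = Option.bind (oprod op xs) (\<lambda>a. Option.bind y (\<lambda>b. op a b))"
proof -
  obtain x xs' where "xs = x # xs'" using assms by (cases xs) auto
  then show ?thesis by simp
qed

lemma sls_shift:
  assumes "finite (K :: nat set)"
  shows "sorted_list_of_set ((\<lambda>n. n + m) ` K) = map (\<lambda>n. n + m) (sorted_list_of_set K)"
proof (rule strict_sorted_equal)
  show "sorted_wrt (<) (sorted_list_of_set ((\<lambda>n. n + m) ` K))" by simp
  have "sorted_wrt (<) (sorted_list_of_set K)" by simp
  then show "sorted_wrt (<) (map (\<lambda>n. n + m) (sorted_list_of_set K))"
    unfolding sorted_wrt_map by (rule sorted_wrt_mono_rel[rotated]) simp
  show "set (sorted_list_of_set ((\<lambda>n. n + m) ` K)) = set (map (\<lambda>n. n + m) (sorted_list_of_set K))"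
    using assms by simp
qed

lemma pprod_shift:
  assumes "finite (K :: nat set)"
  shows "pprod op (\<lambda>n. f (n + m)) K = pprod op f ((\<lambda>n. n + m) ` K)"
  unfolding pprod_def sls_shift[OF assms] by (simp add: o_def)

lemma Pf_iff: "K \<in> Pf X \<longleftrightarrow> K \<subseteq> X \<and> finite K \<and> K \<noteq> {}" by (simp add: Pf_def)

lemma Pf_shift: "K \<in> Pf UNIV \<Longrightarrow> (\<lambda>n. n + m) ` K \<in> Pf (UNIV :: nat set)"
  unfolding Pf_iff by simp

lemma Min_shift:
  assumes "finite K" "K \<noteq> {}" shows "Min ((\<lambda>n::nat. n + m) ` K) = Min K + m"
  using mono_Min_commute[of "\<lambda>n::nat. n + m" K] assms by (simp add: mono_def)

lemma TS_iff: "f \<in> TS op \<longleftrightarrow> adequate_seq op f" by (simp add: TS_def)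

lemma TS_shift:
  assumes f: "f \<in> TS op" shows "(\<lambda>n. f (n + m)) \<in> TS op"
proof -
  have f1: "\<forall>F\<in>Pf UNIV. pprod op f F \<noteq> None"
    and f2: "\<forall>K\<in>Pf UNIV. \<exists>m. \<forall>F\<in>Pf UNIV. Min F \<ge> m \<longrightarrow> the (pprod op f F) \<in> sigma op K"
    using f unfolding TS_iff adequate_seq_def by blast+
  have "\<forall>F\<in>Pf UNIV. pprod op (\<lambda>n. f (n + m)) F \<noteq> None"
  proof
    fix F :: "nat set" assume F: "F \<in> Pf UNIV"
    then have "finite F" unfolding Pf_iff by blast
    then show "pprod op (\<lambda>n. f (n + m)) F \<noteq> None" unfolding pprod_shift[OF \<open>finite F\<close>]
      using f1 Pf_shift[OF F] by blast
  qed
  moreover have "\<forall>K\<in>Pf UNIV. \<exists>m'. \<forall>F\<in>Pf UNIV. Min F \<ge> m' \<longrightarrow> the (pprod op (\<lambda>n. f (n + m)) F) \<in> sigma op K"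
  proof
    fix K :: "'a set" assume "K \<in> Pf UNIV"
    then obtain m' where m': "\<forall>F\<in>Pf UNIV. Min F \<ge> m' \<longrightarrow> the (pprod op f F) \<in> sigma op K" using f2 by blast
    have "\<forall>F\<in>Pf UNIV. Min F \<ge> m' \<longrightarrow> the (pprod op (\<lambda>n. f (n + m)) F) \<in> sigma op K"
    proof (intro ballI impI)
      fix F :: "nat set" assume F: "F \<in> Pf UNIV" and mF: "Min F \<ge> m'"
      have fin: "finite F" "F \<noteq> {}" using F unfolding Pf_iff by blast+
      have "Min ((\<lambda>n. n + m) ` F) \<ge> m'" using Min_shift[OF fin] mF by simp
      then have "the (pprod op f ((\<lambda>n. n + m) ` F)) \<in> sigma op K" using m' Pf_shift[OF F] by blast
      then show "the (pprod op (\<lambda>n. f (n + m)) F) \<in> sigma op K" unfolding pprod_shift[OF fin(1)] .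
    qed
    then show "\<exists>m'. \<forall>F\<in>Pf UNIV. Min F \<ge> m' \<longrightarrow> the (pprod op (\<lambda>n. f (n + m)) F) \<in> sigma op K" by blast
  qed
  ultimately show ?thesis unfolding TS_iff adequate_seq_def by blast
qed

lemma sorted_wrt_butlast_last:
  assumes "sorted_wrt R xs" "xs \<noteq> []"
  shows "sorted_wrt R (butlast xs) \<and> (\<forall>x\<in>set (butlast xs). R x (last xs))"
proof -
  have "xs = butlast xs @ [last xs]" using assms(2) by simp
  then have "sorted_wrt R (butlast xs @ [last xs])" using assms(1) by simp
  then show ?thesis unfolding sorted_wrt_append by simp
qed

lemma sorted_wrt_psubset_distinct: "sorted_wrt (\<subset>) xs \<Longrightarrow> distinct xs"
  by (induction xs) auto

lemma set_butlast_last: "xs \<noteq> [] \<Longrightarrow> x \<in> set xs \<Longrightarrow> x = last xs \<or> x \<in> set (butlast xs)"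
  by (metis append_butlast_last_id butlast.simps(2) in_set_butlastD last_ConsL last_ConsR list.set_cases rotate1.simps(2) set_rotate1 set_ConsD set_append)

locale cconstr =
  fixes op :: "'a pop" and r :: "'a set set" and C :: "'a set"
  assumes ps: "psemigroup op" and rJ: "r \<in> Jdelta op" and idem: "ustar op r r = r" and CR: "C \<in> r"
begin

definition Cs where "Cs = {x\<in>C. sinv op x C \<in> r}"

definition valid :: "((nat \<Rightarrow> 'a) set \<times> (nat \<Rightarrow> 'a)) list \<Rightarrow> bool" where
  "valid cs \<longleftrightarrow> cs \<noteq> [] \<and> (\<forall>p\<in>set cs. fst p \<in> Pf (TS op) \<and> snd p \<in> fst p) \<and> sorted_wrt (\<subset>) (map fst cs)"

definition tm :: "((nat \<Rightarrow> 'a) set \<Rightarrow> 'a \<times> nat set) \<Rightarrow> (nat \<Rightarrow> 'a) set \<times> (nat \<Rightarrow> 'a) \<Rightarrow> 'a option" where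
  "tm g p = Option.bind (pprod op (snd p) (snd (g (fst p)))) (\<lambda>y. op (fst (g (fst p))) y)"

definition cprod where "cprod g cs = oprod op (map (tm g) cs)"

definition below where "below F = {cs. valid cs \<and> fst (last cs) \<subset> F}"

definition Mset where "Mset g F = (\<lambda>cs. the (cprod g cs)) ` below F"

definition Dset where "Dset g F = Cs \<inter> (\<Inter>x\<in>Mset g F. sinv op x Cs)"

definition good where
  "good g F z \<longleftrightarrow> snd z \<in> Pf UNIV \<and> (\<forall>G. G \<subset> F \<and> G \<in> Pf (TS op) \<longrightarrow> Max (snd (g G)) < Min (snd z)) \<and>
     (\<forall>f\<in>F. op (fst z) (the (pprod op f (snd z))) \<in> Some ` Dset g F)"

definition step where "step g F = (SOME z. good g F z)"

definition aH where "aH = wfrec finite_psubset step"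

lemma ur: "ultrafilter_on r" using deltaS_uf[OF Jdelta_delta[OF rJ]] .
lemma rd: "r \<in> deltaS op" using Jdelta_delta[OF rJ] .

lemma Cs_in: "Cs \<in> r"
proof -
  have "C \<in> ustar op r r" using CR idem by simp
  then have "{x. sinv op x C \<in> r} \<in> r" unfolding ustar_iff .
  then have "C \<inter> {x. sinv op x C \<in> r} \<in> r" using uf_Int[OF ur CR] by blast
  moreover have "C \<inter> {x. sinv op x C \<in> r} = Cs" unfolding Cs_def by blast
  ultimately show ?thesis by simp
qed

lemma Cs_sinv:
  assumes x: "x \<in> Cs" shows "sinv op x Cs \<in> r"
proof -
  have "sinv op x C \<in> r" using x unfolding Cs_def by blast
  then have "sinv op x C \<in> ustar op r r" using idem by simp
  then have Y: "{y. sinv op y (sinv op x C) \<in> r} \<in> r" unfolding ustar_iff .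
  have sub: "sinv op x C \<inter> {y. sinv op y (sinv op x C) \<in> r} \<subseteq> sinv op x Cs"
  proof
    fix y assume y: "y \<in> sinv op x C \<inter> {y. sinv op y (sinv op x C) \<in> r}"
    then have "op x y \<noteq> None" "the (op x y) \<in> C" by (auto simp: sinv_iff)
    then obtain u where u: "op x y = Some u" "u \<in> C" by auto
    have "sinv op y (sinv op x C) = sinv op u C" using sinv_assoc[OF ps u(1)] .
    then have "sinv op u C \<in> r" using y by simp
    then have "u \<in> Cs" unfolding Cs_def using u by blast
    then show "y \<in> sinv op x Cs" unfolding sinv_iff using u by simp
  qed
  have "sinv op x C \<inter> {y. sinv op y (sinv op x C) \<in> r} \<in> r"
    using uf_Int[OF ur \<open>sinv op x C \<in> r\<close> Y] .
  then show ?thesis using uf_mono[OF ur _ sub] by blast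
qed

lemma valid_sub:
  assumes v: "valid cs" and p: "p \<in> set cs"
  shows "fst p = fst (last cs) \<or> fst p \<subset> fst (last cs)"
proof -
  have ne: "cs \<noteq> []" and sw: "sorted_wrt (\<subset>) (map fst cs)" using v unfolding valid_def by blast+
  have mne: "map fst cs \<noteq> []" using ne by simp
  have "p = last cs \<or> p \<in> set (butlast cs)" using set_butlast_last[OF ne p] .
  then show ?thesis
  proof
    assume "p \<in> set (butlast cs)"
    then have "fst p \<in> set (butlast (map fst cs))" by (simp add: map_butlast[symmetric])
    then have "fst p \<subset> last (map fst cs)" using sorted_wrt_butlast_last[OF sw mne] by blast
    then show ?thesis using ne by (simp add: last_map)
  qed simp
qed

lemma cprod_cong:
  assumes "\<forall>p\<in>set cs. g (fst p) = g' (fst p)" shows "cprod g cs = cprod g' cs"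
proof -
  have "map (tm g) cs = map (tm g') cs" using assms unfolding tm_def by simp
  then show ?thesis unfolding cprod_def by metis
qed

lemma below_sub:
  assumes "cs \<in> below F" "p \<in> set cs" shows "fst p \<subset> F"
proof -
  have "valid cs" "fst (last cs) \<subset> F" using assms(1) unfolding below_def by blast+
  then show ?thesis using valid_sub[OF _ assms(2)] by blast
qed

lemma good_cong:
  assumes eq: "\<And>G. G \<subset> F \<Longrightarrow> g G = g' G"
  shows "good g F z = good g' F z"
proof -
  have "Mset g F = Mset g' F" unfolding Mset_def
  proof (rule image_cong[OF refl])
    fix cs assume cs: "cs \<in> below F"
    have "\<forall>p\<in>set cs. g (fst p) = g' (fst p)"
    proof
      fix p assume "p \<in> set cs"
      then have "fst p \<subset> F" using below_sub[OF cs] by blast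
      then show "g (fst p) = g' (fst p)" using eq by blast
    qed
    then have "cprod g cs = cprod g' cs" by (rule cprod_cong)
    then show "the (cprod g cs) = the (cprod g' cs)" by simp
  qed
  then have "Dset g F = Dset g' F" unfolding Dset_def by simp
  moreover have "\<forall>G. G \<subset> F \<and> G \<in> Pf (TS op) \<longrightarrow> g G = g' G" using eq by blast
  ultimately show ?thesis unfolding good_def by (metis (no_types, lifting))
qed

lemma aH_eq:
  assumes F: "finite F" shows "aH F = (SOME z. good aH F z)"
proof -
  have "aH F = step (cut aH finite_psubset F) F" unfolding aH_def by (rule wfrec[OF wf_finite_psubset])
  also have "\<dots> = (SOME z. good (cut aH finite_psubset F) F z)" unfolding step_def ..
  also have "(\<lambda>z. good (cut aH finite_psubset F) F z) = (\<lambda>z. good aH F z)"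
  proof
    fix z
    show "good (cut aH finite_psubset F) F z = good aH F z"
    proof (rule good_cong)
      fix G assume "G \<subset> F"
      then have "(G, F) \<in> finite_psubset" using F unfolding finite_psubset_def by blast
      then show "cut aH finite_psubset F G = aH G" by (rule cut_apply)
    qed
  qed
  finally show ?thesis .
qed

lemma below_finite:
  assumes F: "finite F" shows "finite (below F)"
proof -
  have "below F \<subseteq> {xs. set xs \<subseteq> Pow F \<times> F \<and> length xs \<le> card (Pow F)}"
  proof
    fix cs assume cs: "cs \<in> below F"
    have v: "valid cs" using cs unfolding below_def by blast
    have "\<forall>p\<in>set cs. fst p \<subset> F \<and> snd p \<in> fst p" using below_sub[OF cs] v unfolding valid_def by blast
    then have s: "set cs \<subseteq> Pow F \<times> F" by fastforce
    have "distinct (map fst cs)" using v sorted_wrt_psubset_distinct unfolding valid_def by blast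
    then have "length cs = card (set (map fst cs))" using distinct_card by fastforce
    moreover have "set (map fst cs) \<subseteq> Pow F"
    proof
      fix G assume "G \<in> set (map fst cs)"
      then obtain p where "p \<in> set cs" "G = fst p" by auto
      then have "p \<in> Pow F \<times> F" using s by blast
      then show "G \<in> Pow F" using \<open>G = fst p\<close> by (simp add: mem_Times_iff)
    qed
    ultimately have "length cs \<le> card (Pow F)" using card_mono F by (metis finite_Pow_iff)
    then show "cs \<in> {xs. set xs \<subseteq> Pow F \<times> F \<and> length xs \<le> card (Pow F)}" using s by blast
  qed
  moreover have "finite {xs. set xs \<subseteq> Pow F \<times> F \<and> length xs \<le> card (Pow F)}"
    using finite_lists_length_le[of "Pow F \<times> F" "card (Pow F)"] F by simp
  ultimately show ?thesis using finite_subset by blast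
qed

end

context cconstr begin

lemma valid_last: "valid cs \<Longrightarrow> fst (last cs) \<in> Pf (TS op) \<and> snd (last cs) \<in> fst (last cs)"
  unfolding valid_def by (simp add: last_in_set)

lemma valid_butlast:
  assumes v: "valid cs" and ne: "butlast cs \<noteq> []"
  shows "valid (butlast cs) \<and> fst (last (butlast cs)) \<subset> fst (last cs)"
proof -
  have cne: "cs \<noteq> []" and sw: "sorted_wrt (\<subset>) (map fst cs)" and mem: "\<forall>p\<in>set cs. fst p \<in> Pf (TS op) \<and> snd p \<in> fst p"
    using v unfolding valid_def by blast+
  have mne: "map fst cs \<noteq> []" using cne by simp
  have "sorted_wrt (\<subset>) (butlast (map fst cs))" using sorted_wrt_butlast_last[OF sw mne] by blast
  then have sw': "sorted_wrt (\<subset>) (map fst (butlast cs))" by (simp add: map_butlast)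
  have mem': "\<forall>p\<in>set (butlast cs). fst p \<in> Pf (TS op) \<and> snd p \<in> fst p"
  proof
    fix p assume "p \<in> set (butlast cs)"
    then have "p \<in> set cs" by (rule in_set_butlastD)
    then show "fst p \<in> Pf (TS op) \<and> snd p \<in> fst p" using mem by blast
  qed
  have "last (butlast cs) \<in> set (butlast cs)" using ne by (simp add: last_in_set)
  then have "fst (last (butlast cs)) \<in> set (butlast (map fst cs))" by (simp add: map_butlast[symmetric])
  then have "fst (last (butlast cs)) \<subset> last (map fst cs)" using sorted_wrt_butlast_last[OF sw mne] by blast
  then have "fst (last (butlast cs)) \<subset> fst (last cs)" using cne by (simp add: last_map)
  then show ?thesis using sw' mem' ne unfolding valid_def by blast
qed

lemma pprod_some: "f \<in> TS op \<Longrightarrow> K \<in> Pf UNIV \<Longrightarrow> pprod op f K \<noteq> None"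
  unfolding TS_iff adequate_seq_def by blast

lemma main_inv:
  assumes F: "F \<in> Pf (TS op)"
  shows "good aH F (aH F) \<and> (\<forall>cs. valid cs \<and> fst (last cs) = F \<longrightarrow> cprod aH cs \<in> Some ` Cs)"
proof -
  have finF: "finite F" using F unfolding Pf_iff by blast
  have "F \<in> Pf (TS op) \<longrightarrow> good aH F (aH F) \<and> (\<forall>cs. valid cs \<and> fst (last cs) = F \<longrightarrow> cprod aH cs \<in> Some ` Cs)"
    using finF
  proof (induction F rule: finite_psubset_induct)
    case (psubset F)
    show ?case
    proof
      assume F: "F \<in> Pf (TS op)"
      have IH: "\<And>G. G \<subset> F \<Longrightarrow> G \<in> Pf (TS op) \<Longrightarrow> good aH G (aH G) \<and> (\<forall>cs. valid cs \<and> fst (last cs) = G \<longrightarrow> cprod aH cs \<in> Some ` Cs)"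
        using psubset.IH by blast
      have FT: "F \<subseteq> TS op" and Fne: "F \<noteq> {}" using F unfolding Pf_iff by blast+
      have belowCs: "cprod aH cs \<in> Some ` Cs" if cs: "cs \<in> below F" for cs
      proof -
        have v: "valid cs" and lt: "fst (last cs) \<subset> F" using cs unfolding below_def by blast+
        have "fst (last cs) \<in> Pf (TS op)" using valid_last[OF v] by blast
        then show ?thesis using IH[OF lt] v by blast
      qed
      have MCs: "Mset aH F \<subseteq> Cs"
      proof
        fix x assume "x \<in> Mset aH F"
        then obtain cs where "cs \<in> below F" "x = the (cprod aH cs)" unfolding Mset_def by blast
        then show "x \<in> Cs" using belowCs by force
      qed
      have Mfin: "finite (Mset aH F)" unfolding Mset_def by (rule finite_imageI[OF below_finite[OF psubset.hyps]])
      have "\<forall>x\<in>Mset aH F. sinv op x Cs \<in> r" using Cs_sinv MCs by blast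
      then have "(\<Inter>x\<in>Mset aH F. sinv op x Cs) \<in> r" by (rule uf_Inter_fin[OF ur Mfin])
      then have Dr: "Dset aH F \<in> r" unfolding Dset_def using uf_Int[OF ur Cs_in] by blast
      have DJ: "Jdelta_set op (Dset aH F)" using Jdelta_set_of[OF rJ Dr] .
      define GG where "GG = {G. G \<subset> F \<and> G \<in> Pf (TS op)}"
      have GGfin: "finite GG" unfolding GG_def using psubset.hyps
        by (metis (no_types, lifting) finite_Pow_iff Pow_iff mem_Collect_eq psubset_imp_subset rev_finite_subset subsetI)
      have HG: "snd (aH G) \<in> Pf UNIV" if "G \<in> GG" for G
        using IH that unfolding GG_def good_def by blast
      define U where "U = insert 0 (\<Union>G\<in>GG. snd (aH G))"
      have Ufin: "finite U" unfolding U_def using GGfin HG unfolding Pf_iff by blast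
      define m where "m = Suc (Max U)"
      have mbig: "Max (snd (aH G)) < m" if "G \<in> GG" for G
      proof -
        have "finite (snd (aH G))" "snd (aH G) \<noteq> {}" using HG[OF that] unfolding Pf_iff by blast+
        then have "Max (snd (aH G)) \<in> U" unfolding U_def using that Max_in by blast
        then have "Max (snd (aH G)) \<le> Max U" using Ufin by simp
        then show ?thesis unfolding m_def by simp
      qed
      define sh where "sh f = (\<lambda>n. f (n + m))" for f :: "nat \<Rightarrow> 'a"
      have "sh ` F \<subseteq> TS op"
      proof
        fix g assume "g \<in> sh ` F"
        then obtain f where "f \<in> F" "g = sh f" by blast
        then show "g \<in> TS op" unfolding sh_def using FT TS_shift by blast
      qed
      then have F': "sh ` F \<in> Pf (TS op)" unfolding Pf_iff using Fne psubset.hyps by (simp add: finite_imageI)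
      have W: "{undefined :: 'a} \<in> Pf UNIV" unfolding Pf_iff by simp
      obtain a K' where K': "K' \<in> Pf UNIV"
        and aK: "\<forall>f'\<in>sh ` F. the (pprod op f' K') \<in> sigma op (Wmul op {undefined} a) \<and>
                      op a (the (pprod op f' K')) \<in> Some ` Dset aH F"
        using DJ F' W unfolding Jdelta_set_def by blast
      define K where "K = (\<lambda>n. n + m) ` K'"
      have finK': "finite K'" "K' \<noteq> {}" using K' unfolding Pf_iff by blast+
      have "good aH F (a, K)" unfolding good_def fst_conv snd_conv
      proof (intro conjI allI impI ballI)
        show "K \<in> Pf UNIV" unfolding K_def using Pf_shift[OF K'] .
      next
        fix G assume "G \<subset> F \<and> G \<in> Pf (TS op)"
        then have "Max (snd (aH G)) < m" using mbig unfolding GG_def by blast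
        moreover have "Min K = Min K' + m" unfolding K_def using Min_shift[OF finK'] .
        ultimately show "Max (snd (aH G)) < Min K" by simp
      next
        fix f assume f: "f \<in> F"
        then have "op a (the (pprod op (sh f) K')) \<in> Some ` Dset aH F" using aK by blast
        moreover have "pprod op (sh f) K' = pprod op f K" unfolding sh_def K_def using pprod_shift[OF finK'(1)] .
        ultimately show "op a (the (pprod op f K)) \<in> Some ` Dset aH F" by simp
      qed
      then have ex: "\<exists>z. good aH F z" by blast
      have gF: "good aH F (aH F)" unfolding aH_eq[OF psubset.hyps] using someI_ex[OF ex] .
      have chainF: "cprod aH cs \<in> Some ` Cs" if cs: "valid cs" "fst (last cs) = F" for cs
      proof -
        obtain f where lcs: "last cs = (F, f)" using cs(2) by (metis prod.collapse)
        have fF: "f \<in> F" using valid_last[OF cs(1)] lcs by simp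
        have fT: "f \<in> TS op" using fF FT by blast
        have KP: "snd (aH F) \<in> Pf UNIV" using gF unfolding good_def by blast
        obtain y where y: "pprod op f (snd (aH F)) = Some y" using pprod_some[OF fT KP] by blast
        have "op (fst (aH F)) (the (pprod op f (snd (aH F)))) \<in> Some ` Dset aH F"
          using gF fF unfolding good_def by blast
        then obtain b where b: "op (fst (aH F)) y = Some b" "b \<in> Dset aH F" using y by auto
        have tmF: "tm aH (last cs) = Some b" unfolding tm_def lcs using y b by simp
        have cne: "cs \<noteq> []" using cs(1) unfolding valid_def by blast
        have csd: "cs = butlast cs @ [last cs]" using cne by simp
        show ?thesis
        proof (cases "butlast cs = []")
          case True
          then have "cs = [last cs]" using csd by simp
          then have "cprod aH cs = Some b" unfolding cprod_def using tmF by (metis list.simps(8,9) oprod_single)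
          moreover have "b \<in> Cs" using b(2) unfolding Dset_def by blast
          ultimately show ?thesis by blast
        next
          case False
          have vb: "valid (butlast cs)" and lt: "fst (last (butlast cs)) \<subset> F"
            using valid_butlast[OF cs(1) False] cs(2) by blast+
          then have bb: "butlast cs \<in> below F" unfolding below_def by blast
          then obtain x where x: "cprod aH (butlast cs) = Some x" "x \<in> Cs" using belowCs by blast
          have "x \<in> Mset aH F" unfolding Mset_def using bb x(1) by force
          then have "b \<in> sinv op x Cs" using b(2) unfolding Dset_def by blast
          then obtain c where c: "op x b = Some c" "c \<in> Cs" unfolding sinv_iff by auto
          have "cprod aH cs = oprod op (map (tm aH) (butlast cs) @ [tm aH (last cs)])"
            unfolding cprod_def by (subst csd) simp
          also have "\<dots> = Option.bind (cprod aH (butlast cs)) (\<lambda>a. Option.bind (tm aH (last cs)) (\<lambda>b. op a b))"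
            unfolding cprod_def using oprod_snoc[of "map (tm aH) (butlast cs)" op "tm aH (last cs)"] False by simp
          also have "\<dots> = Some c" using x(1) tmF c(1) by simp
          finally show ?thesis using c(2) by blast
        qed
      qed
      show "good aH F (aH F) \<and> (\<forall>cs. valid cs \<and> fst (last cs) = F \<longrightarrow> cprod aH cs \<in> Some ` Cs)"
        using gF chainF by blast
    qed
  qed
  then show ?thesis using F by blast
qed

end

lemma transp_psubset: "transp ((\<subset>) :: 'x set \<Rightarrow> 'x set \<Rightarrow> bool)"
  by (rule transpI) blast

context cconstr begin

lemma Cset: "C_set op C"
  unfolding C_set_def
proof (intro exI conjI)
  show "\<forall>F\<in>Pf (TS op). snd (aH F) \<in> Pf UNIV" using main_inv unfolding good_def by blast
  show "\<forall>F\<in>Pf (TS op). \<forall>G\<in>Pf (TS op). F \<subset> G \<longrightarrow> Max (snd (aH F)) < Min (snd (aH G))"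
    using main_inv unfolding good_def by blast
  show "\<forall>Gs fs. Gs \<noteq> [] \<and> length fs = length Gs \<and>
           (\<forall>i<length Gs. Gs ! i \<in> Pf (TS op) \<and> fs ! i \<in> Gs ! i) \<and>
           (\<forall>i. Suc i < length Gs \<longrightarrow> Gs ! i \<subset> Gs ! Suc i) \<longrightarrow>
           oprod op (map (\<lambda>i. Option.bind (pprod op (fs ! i) (snd (aH (Gs ! i)))) (\<lambda>y. op (fst (aH (Gs ! i))) y))
                        [0..<length Gs]) \<in> Some ` C"
  proof (intro allI impI)
    fix Gs :: "(nat \<Rightarrow> 'a) set list" and fs :: "(nat \<Rightarrow> 'a) list"
    assume as: "Gs \<noteq> [] \<and> length fs = length Gs \<and>
           (\<forall>i<length Gs. Gs ! i \<in> Pf (TS op) \<and> fs ! i \<in> Gs ! i) \<and>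
           (\<forall>i. Suc i < length Gs \<longrightarrow> Gs ! i \<subset> Gs ! Suc i)"
    have ne: "Gs \<noteq> []" and len: "length fs = length Gs"
      and mem: "\<forall>i<length Gs. Gs ! i \<in> Pf (TS op) \<and> fs ! i \<in> Gs ! i"
      and ch: "\<forall>i. Suc i < length Gs \<longrightarrow> Gs ! i \<subset> Gs ! Suc i" using as by blast+
    define cs where "cs = zip Gs fs"
    have eqmap: "map (\<lambda>i. Option.bind (pprod op (fs ! i) (snd (aH (Gs ! i)))) (\<lambda>y. op (fst (aH (Gs ! i))) y))
                        [0..<length Gs] = map (tm aH) cs"
    proof (rule nth_equalityI)
      show "length (map (\<lambda>i. Option.bind (pprod op (fs ! i) (snd (aH (Gs ! i)))) (\<lambda>y. op (fst (aH (Gs ! i))) y))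
                        [0..<length Gs]) = length (map (tm aH) cs)" unfolding cs_def using len by simp
      fix i assume "i < length (map (\<lambda>i. Option.bind (pprod op (fs ! i) (snd (aH (Gs ! i)))) (\<lambda>y. op (fst (aH (Gs ! i))) y))
                        [0..<length Gs])"
      then have i: "i < length Gs" by simp
      then show "map (\<lambda>i. Option.bind (pprod op (fs ! i) (snd (aH (Gs ! i)))) (\<lambda>y. op (fst (aH (Gs ! i))) y))
                        [0..<length Gs] ! i = map (tm aH) cs ! i"
        unfolding cs_def using len by (simp add: tm_def)
    qed
    have mfc: "map fst cs = Gs" unfolding cs_def using len by simp
    have v: "valid cs" unfolding valid_def
    proof (intro conjI)
      show "cs \<noteq> []" unfolding cs_def using ne len by (cases Gs; cases fs) auto
      show "\<forall>p\<in>set cs. fst p \<in> Pf (TS op) \<and> snd p \<in> fst p"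
      proof
        fix p assume "p \<in> set cs"
        then obtain n where "Gs ! n = fst p" "fs ! n = snd p" "n < length Gs" unfolding cs_def in_set_zip by blast
        then show "fst p \<in> Pf (TS op) \<and> snd p \<in> fst p" using mem by metis
      qed
      show "sorted_wrt (\<subset>) (map fst cs)" unfolding mfc sorted_wrt_iff_nth_Suc_transp[OF transp_psubset]
        using ch by blast
    qed
    have fl: "fst (last cs) = last Gs" unfolding cs_def using last_zip[of Gs fs] ne len by (cases fs) auto
    have "last Gs = Gs ! (length Gs - 1)" using ne by (simp add: last_conv_nth)
    then have "last Gs \<in> Pf (TS op)" using mem ne by simp
    then have "cprod aH cs \<in> Some ` Cs" using main_inv[of "last Gs"] v fl by blast
    then have "oprod op (map (tm aH) cs) \<in> Some ` C" unfolding cprod_def Cs_def by blast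
    then show "oprod op (map (\<lambda>i. Option.bind (pprod op (fs ! i) (snd (aH (Gs ! i)))) (\<lambda>y. op (fst (aH (Gs ! i))) y))
                        [0..<length Gs]) \<in> Some ` C" unfolding eqmap .
  qed
qed

end

theorem corollary5p8:
  fixes opS :: "'a pop" and opT :: "'b pop" and h :: "'a \<Rightarrow> 'b"
    and A :: "'b set" and p :: "'b set set"
  assumes "psemigroup opS" "pcomm opS" "adequate opS"
    and "psemigroup opT" "pcomm opT" "adequate opT"
    and "phom opS opT h" "surj h"
    and "htilde h ` deltaS opS = deltaS opT"
    and "\<not> central opT A"
    and "A \<in> p" "p \<in> htilde h ` Jdelta opS" "ustar opT p p = p"
  shows "C_set opS (h -` A) \<and> \<not> central opS (h -` A)"
proof
  obtain q where q: "q \<in> Jdelta opS" "p = htilde h q" using assms(12) by blast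
  obtain r where r: "r \<in> Jdelta opS" "ustar opS r r = r" "htilde h r = p"
    using idem_exists[OF assms(1) assms(7) q(1) q(2)[symmetric] assms(13)] by blast
  have "h -` A \<in> r" using assms(11) r(3) unfolding htilde_def by blast
  then interpret cc: cconstr opS r "h -` A" using assms(1) r(1,2) by unfold_locales
  show "C_set opS (h -` A)" using cc.Cset .
  show "\<not> central opS (h -` A)" using noncentral[OF assms(1,3,4,6,7,9,10)] .
qed

end
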